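(* Let $\gamma>0$ and assume the Hamiltonians satisfy (H) and $\min_{\mathbb R}H_\alpha=H_\alpha(0)$ for every $\alpha$. Then there exists a vertex test function $G:J^2\to\mathbb R$ associated with the parameter $\gamma$ and the flux limiter $A=A_0+\gamma$ (i.e. satisfying (i)-(vi) below) which moreover, for every $K>0$, is $C^{1,1}$ on $J_K^2=\{(x,y)\in J^2:d(x,y)\le K\}$ (on each piece $(J_\alpha\times J_\beta)\cap J_K^2$) with $$\|D^2G\|_{L^\infty(J_K^2)}\le\frac{C_K}{\gamma},$$ where $C_K$ depends only on $K$ and the Hamiltonians. Vertex test function properties: (i) $G\in C(J^2)$, $G(x,\cdot)\in C^1(J)$ and $G(\cdot,y)\in C^1(J)$ for all $x,y$; (ii) $G\ge0=G(0,0)$; (iii) $0\le G(x,x)\le\gamma$ for all $x\in J$; (iv) $\mathbf H(y,-G_y(x,y))-\mathbf H(x,G_x(x,y))\le\gamma$ for all $(x,y)\in J^2$; (v) there is a non-decreasing $g:[0,\infty)\to\mathbb R$ with $g(d(x,y))\le G(x,y)$ and $g(a)/a\to+\infty$ as $a\to+\infty$; (vi) for every $K\ge0$ there is $C_K'$ with $|G_x(x,y)|+|G_y(x,y)|\le C_K'$ whenever $d(x,y)\le K$.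
   Context: Junction: $N\ge1$, $J=\bigcup_{\alpha=1}^NJ_\alpha$, $N$ copies of $[0,\infty)$ glued at $0$; points of $J_\alpha$ identified with their coordinate; $d(x,y)=|x-y|$ on the same branch, $|x|+|y|$ otherwise. A function on $J$ is $C^1(J)$ if it is continuous and $C^1$ on each branch (one-sided at $0$); its gradient is the branch derivative off $0$ and the vector $(\partial_1,\dots,\partial_N)$ of branch derivatives at $0$. $G_x,G_y$ denote these gradients in the first/second variable. Hamiltonians (H): $H_\alpha:\mathbb R\to\mathbb R$ Lipschitz continuous, coercive, quasi-convex (sublevel sets convex). $H_\alpha^-(p)=H_\alpha(\min(p,0))$, $H_\alpha^+(p)=H_\alpha(\max(p,0))$ (since $0$ is a minimum point). $A_0=\max_\alpha\min_{\mathbb R}H_\alpha$. $F_A(p)=\max(A,\max_\alpha H_\alpha^-(p_\alpha))$. Shorthand: $\mathbf H(x,p)=H_\alpha(p)$ for $x\in J_\alpha\setminus\{0\}$, $\mathbf H(0,p)=F_A(p)$ for $p\in\mathbb R^N$, with $A=A_0+\gamma$. *)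

theory Defs
  imports "HOL-Analysis.Analysis"
begin

text \<open>The junction J with N branches. A point is a pair (branch index, coordinate),
  branches indexed by 0..N-1; the vertex is represented canonically by (0,0).\<close>

type_synonym jpoint = "nat \<times> real"

definition J :: "nat \<Rightarrow> jpoint set" where
  "J N = {(a, t). a < N \<and> t > 0} \<union> {(0, 0)}"

definition jpt :: "nat \<Rightarrow> real \<Rightarrow> jpoint" where
  "jpt \<alpha> t = (if t = 0 then (0, 0) else (\<alpha>, t))"

definition dJ :: "jpoint \<Rightarrow> jpoint \<Rightarrow> real" where
  "dJ x y = (if fst x = fst y then \<bar>snd x - snd y\<bar> else snd x + snd y)"

definition bderiv :: "(jpoint \<Rightarrow> real) \<Rightarrow> nat \<Rightarrow> real \<Rightarrow> real" where
  "bderiv u \<alpha> t = (THE D. ((\<lambda>s. u (jpt \<alpha> s)) has_real_derivative D) (at t within {0..}))"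

definition C1J :: "nat \<Rightarrow> (jpoint \<Rightarrow> real) \<Rightarrow> bool" where
  "C1J N u \<longleftrightarrow> (\<forall>\<alpha><N.
      continuous_on {0..} (\<lambda>t. u (jpt \<alpha> t)) \<and>
      (\<forall>t\<ge>0. ((\<lambda>s. u (jpt \<alpha> s)) has_real_derivative bderiv u \<alpha> t) (at t within {0..})) \<and>
      continuous_on {0..} (bderiv u \<alpha>))"

text \<open>Gradient: off the vertex the branch derivative (stored in every component;
  only the component of the current branch is used), at the vertex the vector of
  branch derivatives (components 0..N-1).\<close>
definition grad :: "(jpoint \<Rightarrow> real) \<Rightarrow> jpoint \<Rightarrow> nat \<Rightarrow> real" where
  "grad u x = (\<lambda>\<beta>. if snd x = 0 then bderiv u \<beta> 0 else bderiv u (fst x) (snd x))"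

definition gnorm :: "nat \<Rightarrow> (nat \<Rightarrow> real) \<Rightarrow> real" where
  "gnorm N p = Max ((\<lambda>\<beta>. \<bar>p \<beta>\<bar>) ` {..<N})"

definition hamiltonians :: "nat \<Rightarrow> (nat \<Rightarrow> real \<Rightarrow> real) \<Rightarrow> bool" where
  "hamiltonians N H \<longleftrightarrow> (\<forall>\<alpha><N.
      (\<exists>L. lipschitz_on L UNIV (H \<alpha>)) \<and>
      filterlim (H \<alpha>) at_top at_infinity \<and>
      (\<forall>c. convex {p. H \<alpha> p \<le> c}))"

definition A0 :: "nat \<Rightarrow> (nat \<Rightarrow> real \<Rightarrow> real) \<Rightarrow> real" where
  "A0 N H = Max ((\<lambda>\<alpha>. Inf (range (H \<alpha>))) ` {..<N})"

definition FA :: "nat \<Rightarrow> (nat \<Rightarrow> real \<Rightarrow> real) \<Rightarrow> real \<Rightarrow> (nat \<Rightarrow> real) \<Rightarrow> real" where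
  "FA N H A p = max A (Max ((\<lambda>\<alpha>. H \<alpha> (min (p \<alpha>) 0)) ` {..<N}))"

definition Hb :: "nat \<Rightarrow> (nat \<Rightarrow> real \<Rightarrow> real) \<Rightarrow> real \<Rightarrow> jpoint \<Rightarrow> (nat \<Rightarrow> real) \<Rightarrow> real" where
  "Hb N H A x p = (if snd x = 0 then FA N H A p else H (fst x) (p (fst x)))"

definition vertex_test ::
  "nat \<Rightarrow> (nat \<Rightarrow> real \<Rightarrow> real) \<Rightarrow> real \<Rightarrow> (jpoint \<Rightarrow> jpoint \<Rightarrow> real) \<Rightarrow> bool" where
  "vertex_test N H \<gamma> G \<longleftrightarrow>
    \<comment> \<open>(i)\<close>
    (\<forall>\<alpha><N. \<forall>\<beta><N. continuous_on ({0..} \<times> {0..})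
        (\<lambda>z. G (jpt \<alpha> (fst z)) (jpt \<beta> (snd z)))) \<and>
    (\<forall>x\<in>J N. C1J N (G x)) \<and> (\<forall>y\<in>J N. C1J N (\<lambda>x. G x y)) \<and>
    \<comment> \<open>(ii)\<close>
    (\<forall>x\<in>J N. \<forall>y\<in>J N. 0 \<le> G x y) \<and> G (0, 0) (0, 0) = 0 \<and>
    \<comment> \<open>(iii)\<close>
    (\<forall>x\<in>J N. 0 \<le> G x x \<and> G x x \<le> \<gamma>) \<and>
    \<comment> \<open>(iv)\<close>
    (\<forall>x\<in>J N. \<forall>y\<in>J N.
       Hb N H (A0 N H + \<gamma>) y (\<lambda>\<beta>. - grad (G x) y \<beta>)
       - Hb N H (A0 N H + \<gamma>) x (grad (\<lambda>x'. G x' y) x) \<le> \<gamma>) \<and>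
    \<comment> \<open>(v)\<close>
    (\<exists>g. mono_on {0..} g \<and> (\<forall>x\<in>J N. \<forall>y\<in>J N. g (dJ x y) \<le> G x y) \<and>
         filterlim (\<lambda>a. g a / a) at_top at_top) \<and>
    \<comment> \<open>(vi)\<close>
    (\<forall>K\<ge>0. \<exists>C. \<forall>x\<in>J N. \<forall>y\<in>J N. dJ x y \<le> K \<longrightarrow>
        gnorm N (grad (\<lambda>x'. G x' y) x) + gnorm N (grad (G x) y) \<le> C)"

definition piece :: "nat \<Rightarrow> nat \<Rightarrow> real \<Rightarrow> (real \<times> real) set" where
  "piece \<alpha> \<beta> K = {z. fst z \<ge> 0 \<and> snd z \<ge> 0 \<and> dJ (jpt \<alpha> (fst z)) (jpt \<beta> (snd z)) \<le> K}"

definition DG :: "(jpoint \<Rightarrow> jpoint \<Rightarrow> real) \<Rightarrow> nat \<Rightarrow> nat \<Rightarrow> real \<times> real \<Rightarrow> real \<times> real" where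
  "DG G \<alpha> \<beta> z = (bderiv (\<lambda>x. G x (jpt \<beta> (snd z))) \<alpha> (fst z),
                  bderiv (G (jpt \<alpha> (fst z))) \<beta> (snd z))"

text \<open>G is C^{1,1} on each piece of J_K^2 with second derivatives bounded by M,
  expressed as: G is differentiable on the (convex) piece with gradient DG, and the
  gradient is M-Lipschitz (Euclidean norm).\<close>
definition C11_on :: "nat \<Rightarrow> (jpoint \<Rightarrow> jpoint \<Rightarrow> real) \<Rightarrow> real \<Rightarrow> real \<Rightarrow> bool" where
  "C11_on N G K M \<longleftrightarrow> (\<forall>\<alpha><N. \<forall>\<beta><N.
     (\<forall>z\<in>piece \<alpha> \<beta> K.
        ((\<lambda>w. G (jpt \<alpha> (fst w)) (jpt \<beta> (snd w))) has_derivative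
           (\<lambda>h. fst h * fst (DG G \<alpha> \<beta> z) + snd h * snd (DG G \<alpha> \<beta> z)))
        (at z within piece \<alpha> \<beta> K)) \<and>
     (\<forall>z\<in>piece \<alpha> \<beta> K. \<forall>w\<in>piece \<alpha> \<beta> K.
        norm (DG G \<alpha> \<beta> z - DG G \<alpha> \<beta> w) \<le> M * norm (z - w)))"

end

theory Submission
  imports Defs
begin


definition prim :: "(real \<Rightarrow> real) \<Rightarrow> real \<Rightarrow> real \<Rightarrow> real" where
  "prim f c u = (if c \<le> u then integral {c..u} f else - integral {u..c} f)"

lemma prim_deriv:
  assumes f: "continuous_on UNIV f"
  shows "DERIV (prim f c) x :> f x"
proof -
  define a where "a = min c x - 1"
  define b where "b = max c x + 1"
  have fi: "f integrable_on {a..b}"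
    by (rule integrable_continuous_real) (use f continuous_on_subset in blast)
  have eq: "prim f c u = integral {a..u} f - integral {a..c} f" if "u \<in> {a<..<b}" for u
  proof (cases "c \<le> u")
    case True
    have "integral {a..c} f + integral {c..u} f = integral {a..u} f"
      by (rule Henstock_Kurzweil_Integration.integral_combine[OF _ _ integrable_on_subinterval[OF fi]]) (use that True a_def b_def in auto)
    then show ?thesis using True by (simp add: prim_def)
  next
    case False
    have "integral {a..u} f + integral {u..c} f = integral {a..c} f"
      by (rule Henstock_Kurzweil_Integration.integral_combine[OF _ _ integrable_on_subinterval[OF fi]]) (use that False a_def b_def in auto)
    then show ?thesis using False by (simp add: prim_def)
  qed
  have "((\<lambda>u. integral {a..u} f) has_real_derivative f x) (at x within {a..b})"
    by (rule integral_has_real_derivative) (use f continuous_on_subset a_def b_def in auto)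
  moreover have "at x within {a..b} = at x"
    by (rule at_within_Icc_at) (auto simp: a_def b_def)
  ultimately have "((\<lambda>u. integral {a..u} f) has_real_derivative f x) (at x)" by simp
  then have "((\<lambda>u. integral {a..u} f - integral {a..c} f) has_real_derivative f x - 0) (at x)"
    by (intro DERIV_diff DERIV_const)
  then have "((\<lambda>u. integral {a..u} f - integral {a..c} f) has_real_derivative f x) (at x)" by simp
  then show ?thesis
    by (rule has_field_derivative_transform_within_open[where S="{a<..<b}"])
       (use eq in \<open>auto simp: a_def b_def\<close>)
qed

lemma prim_self [simp]: "prim f c c = 0"
  by (simp add: prim_def)

lemma bderiv_eq:
  assumes "t \<ge> 0" "((\<lambda>s. u (jpt \<alpha> s)) has_real_derivative D) (at t within {0..})"
  shows "bderiv u \<alpha> t = D"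
  unfolding bderiv_def
proof (rule the_equality)
  show "((\<lambda>s. u (jpt \<alpha> s)) has_real_derivative D) (at t within {0..})" by fact
  fix E assume E: "((\<lambda>s. u (jpt \<alpha> s)) has_real_derivative E) (at t within {0..})"
  have nb: "at t within {0..} \<noteq> (bot :: real filter)"
  proof -
    have "t islimpt {t..t+1}" by simp
    then have "t islimpt {0..}" by (rule islimpt_subset) (use assms(1) in auto)
    then show ?thesis by (simp add: trivial_limit_within)
  qed
  show "E = D"
    using vector_derivative_unique_within[OF nb] E assms(2)
    by (metis has_real_derivative_iff_has_vector_derivative)
qed




definition ramp :: "real \<Rightarrow> real" where "ramp x = min (max x 0) 1"

definition Yt :: "(nat \<Rightarrow> real) \<Rightarrow> real \<Rightarrow> real" where
  "Yt c \<sigma> = (\<Sum>n<nat \<lceil>\<sigma>\<rceil>. c n * ramp (\<sigma> - real n))"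

lemma ramp_zero: "x \<le> 0 \<Longrightarrow> ramp x = 0" by (simp add: ramp_def)
lemma ramp_one: "x \<ge> 1 \<Longrightarrow> ramp x = 1" by (simp add: ramp_def)
lemma ramp_nonneg: "ramp x \<ge> 0" by (simp add: ramp_def)
lemma ramp_mono: "x \<le> y \<Longrightarrow> ramp x \<le> ramp y" by (simp add: ramp_def)
lemma ramp_lip: "\<bar>ramp x - ramp y\<bar> \<le> \<bar>x - y\<bar>" by (simp add: ramp_def)
lemma ramp_cont: "continuous_on UNIV ramp"
  unfolding ramp_def by (intro continuous_intros)

lemma Yt_sum:
  assumes "\<sigma> \<le> real K"
  shows "Yt c \<sigma> = (\<Sum>n<K. c n * ramp (\<sigma> - real n))"
proof -
  have sub: "{..<nat \<lceil>\<sigma>\<rceil>} \<subseteq> {..<K}" using assms by (auto simp: nat_le_iff ceiling_le_iff)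
  have "(\<Sum>n<K. c n * ramp (\<sigma> - real n)) = (\<Sum>n<nat \<lceil>\<sigma>\<rceil>. c n * ramp (\<sigma> - real n))"
  proof (rule sum.mono_neutral_right[OF _ sub])
    show "\<forall>i\<in>{..<K} - {..<nat \<lceil>\<sigma>\<rceil>}. c i * ramp (\<sigma> - real i) = 0"
    proof
      fix i assume "i \<in> {..<K} - {..<nat \<lceil>\<sigma>\<rceil>}"
      then have "nat \<lceil>\<sigma>\<rceil> \<le> i" by auto
      then have "\<sigma> \<le> real i" by linarith
      then show "c i * ramp (\<sigma> - real i) = 0" by (simp add: ramp_zero)
    qed
  qed auto
  then show ?thesis by (simp add: Yt_def)
qed

lemma Yt_zero: "Yt c 0 = 0" by (simp add: Yt_def)

definition ell :: "(nat \<Rightarrow> real) \<Rightarrow> real \<Rightarrow> real" where "ell c R = (\<Sum>n<nat \<lceil>R\<rceil>. c n)"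

context
  fixes c :: "nat \<Rightarrow> real"
  assumes c0: "\<And>n. c n \<ge> 0"
begin

lemma Yt_nonneg: "Yt c \<sigma> \<ge> 0"
  unfolding Yt_def by (intro sum_nonneg mult_nonneg_nonneg c0 ramp_nonneg)

lemma Yt_mono:
  assumes "x \<le> y" shows "Yt c x \<le> Yt c y"
proof -
  define K where "K = nat \<lceil>y\<rceil>"
  have "y \<le> real K" unfolding K_def by linarith
  then have "x \<le> real K" using assms by simp
  have "Yt c x = (\<Sum>n<K. c n * ramp (x - real n))" by (rule Yt_sum) fact
  also have "\<dots> \<le> (\<Sum>n<K. c n * ramp (y - real n))"
    by (intro sum_mono mult_left_mono ramp_mono c0) (use assms in auto)
  also have "\<dots> = Yt c y" by (rule Yt_sum[symmetric]) fact
  finally show ?thesis .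
qed

lemma Yt_ge:
  assumes "\<sigma> \<ge> real n + 1" shows "Yt c \<sigma> \<ge> c n"
proof -
  define K where "K = nat \<lceil>\<sigma>\<rceil>"
  have K: "\<sigma> \<le> real K" unfolding K_def by linarith
  have "int n < \<lceil>\<sigma>\<rceil>" using assms le_of_int_ceiling[of \<sigma>] by linarith
  then have nK: "n \<in> {..<K}" unfolding K_def by auto
  have "c n = c n * ramp (\<sigma> - real n)" using assms by (simp add: ramp_one)
  also have "\<dots> \<le> (\<Sum>n<K. c n * ramp (\<sigma> - real n))"
    by (rule member_le_sum[OF nK]) (auto intro: mult_nonneg_nonneg c0 ramp_nonneg)
  also have "\<dots> = Yt c \<sigma>" by (rule Yt_sum[symmetric]) fact
  finally show ?thesis .
qed

lemma ell_nonneg: "ell c R \<ge> 0" unfolding ell_def by (intro sum_nonneg c0)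

lemma Yt_lip:
  assumes "x \<le> R" "y \<le> R"
  shows "\<bar>Yt c x - Yt c y\<bar> \<le> ell c R * \<bar>x - y\<bar>"
proof -
  define K where "K = nat \<lceil>R\<rceil>"
  have K: "R \<le> real K" unfolding K_def by linarith
  have "\<bar>Yt c x - Yt c y\<bar> = \<bar>\<Sum>n<K. c n * (ramp (x - real n) - ramp (y - real n))\<bar>"
    using Yt_sum[of x K c] Yt_sum[of y K c] assms K
    by (simp add: sum_subtractf[symmetric] algebra_simps)
  also have "\<dots> \<le> (\<Sum>n<K. \<bar>c n * (ramp (x - real n) - ramp (y - real n))\<bar>)"
    by (rule sum_abs)
  also have "\<dots> \<le> (\<Sum>n<K. c n * \<bar>x - y\<bar>)"
  proof (rule sum_mono)
    fix n
    have "\<bar>ramp (x - real n) - ramp (y - real n)\<bar> \<le> \<bar>x - y\<bar>"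
      using ramp_lip[of "x - real n" "y - real n"] by simp
    then show "\<bar>c n * (ramp (x - real n) - ramp (y - real n))\<bar> \<le> c n * \<bar>x - y\<bar>"
      using c0[of n] by (simp add: abs_mult mult_left_mono)
  qed
  also have "\<dots> = ell c R * \<bar>x - y\<bar>" by (simp add: ell_def K_def sum_distrib_right)
  finally show ?thesis .
qed

lemma Yt_cont: "continuous_on UNIV (Yt c)"
proof -
  have "isCont (Yt c) x" for x
  proof -
    define K where "K = nat \<lceil>x\<rceil> + 1"
    have xK: "x < real K" unfolding K_def by linarith
    have "continuous_on {..<real K} (\<lambda>\<sigma>. \<Sum>n<K. c n * ramp (\<sigma> - real n))"
      by (intro continuous_intros continuous_on_compose2[OF ramp_cont]) auto
    then have "continuous_on {..<real K} (Yt c)"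
      by (rule continuous_on_cong[THEN iffD1, rotated 2]) (auto intro!: Yt_sum[symmetric])
    then show ?thesis using xK
      by (simp add: continuous_on_eq_continuous_at)
  qed
  then show ?thesis by (simp add: continuous_at_imp_continuous_on)
qed

end




locale vt =
  fixes N :: nat and H :: "nat \<Rightarrow> real \<Rightarrow> real" and L Az :: real
    and h :: "real \<Rightarrow> real" and a :: real and c :: "nat \<Rightarrow> real" and \<gamma> :: real
  assumes N: "N \<ge> 1"
    and Hmono: "\<And>\<alpha> p q. \<alpha> < N \<Longrightarrow> 0 \<le> p \<Longrightarrow> p \<le> q \<Longrightarrow> H \<alpha> p \<le> H \<alpha> q"
    and Hlip: "\<And>\<alpha> p q. \<alpha> < N \<Longrightarrow> \<bar>H \<alpha> p - H \<alpha> q\<bar> \<le> L * \<bar>p - q\<bar>"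
    and L: "L \<ge> 1"
    and H0: "\<And>\<alpha>. \<alpha> < N \<Longrightarrow> H \<alpha> 0 \<le> Az"
    and Az: "Az = A0 N H"
    and h_le: "\<And>\<alpha> p. \<alpha> < N \<Longrightarrow> 0 \<le> p \<Longrightarrow> h p \<le> H \<alpha> p"
    and h_mono: "\<And>p q. 0 \<le> p \<Longrightarrow> p \<le> q \<Longrightarrow> h p \<le> h q"
    and h_lip: "\<And>p q. \<bar>h p - h q\<bar> \<le> L * \<bar>p - q\<bar>"
    and h_coerc: "\<And>B. \<exists>R. \<forall>p\<ge>R. h p \<ge> B"
    and a_pos: "a > 0" and ha: "h a \<ge> Az + 1"
    and c0: "\<And>n. c n \<ge> 0" and hc: "\<And>n. h (a + c n) \<ge> Az + real n + 2"
    and gam: "\<gamma> > 0"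
begin

definition "M = a\<^sup>2 / (2 * \<gamma>)"
definition "us = 2 * \<gamma> / a"
definition "S u = max 0 ((h (max u 0 / (1 + \<gamma>)) - Az) / (2 * L))"
definition "phi u = min (M * (u - us)) (S u) - Yt c (2 * L * max (- u) 0 / (1 + \<gamma>))"

lemma M_pos: "M > 0" using a_pos gam by (simp add: M_def)
lemma us_pos: "us > 0" using a_pos gam by (simp add: us_def)
lemma M_us: "M * us = a" using a_pos gam by (simp add: M_def us_def power2_eq_square)
lemma M_us2: "M * us\<^sup>2 / 2 = \<gamma>" using a_pos gam by (simp add: M_def us_def power2_eq_square)

lemma S_nonneg: "S u \<ge> 0" by (simp add: S_def)

lemma Yt_nn: "Yt c \<sigma> \<ge> 0" using Yt_nonneg[of c] c0 by blast
lemma Yt_mn: "x \<le> y \<Longrightarrow> Yt c x \<le> Yt c y" using Yt_mono[of c] c0 by blast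
lemma Yt_lp: "x \<le> R \<Longrightarrow> y \<le> R \<Longrightarrow> \<bar>Yt c x - Yt c y\<bar> \<le> ell c R * \<bar>x - y\<bar>"
  using Yt_lip[of c] c0 by blast
lemma Yt_gen: "\<sigma> \<ge> real n + 1 \<Longrightarrow> Yt c \<sigma> \<ge> c n" using Yt_ge[of c] c0 by blast
lemma ell_nn: "ell c R \<ge> 0" using ell_nonneg[of c] c0 by blast
lemma Yt_ct: "continuous_on UNIV (Yt c)" using Yt_cont[of c] c0 by blast

lemma h_cont: "continuous_on UNIV h"
proof (rule lipschitz_on_continuous_on)
  show "lipschitz_on L UNIV h"
    by (rule lipschitz_onI) (use h_lip L in \<open>auto simp: dist_real_def\<close>)
qed

lemma S_mono: "u \<le> v \<Longrightarrow> S u \<le> S v"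
proof -
  assume uv: "u \<le> v"
  have "h (max u 0 / (1 + \<gamma>)) \<le> h (max v 0 / (1 + \<gamma>))"
    by (rule h_mono) (use uv gam in \<open>auto simp: divide_right_mono\<close>)
  then have "(h (max u 0 / (1 + \<gamma>)) - Az) / (2 * L) \<le> (h (max v 0 / (1 + \<gamma>)) - Az) / (2 * L)"
    using L by (intro divide_right_mono) auto
  then show ?thesis unfolding S_def by (metis max.mono order_refl)
qed

lemma S_lip: "\<bar>S u - S v\<bar> \<le> \<bar>u - v\<bar> / (2 * (1 + \<gamma>))"
proof -
  have "\<bar>h (max u 0 / (1 + \<gamma>)) - h (max v 0 / (1 + \<gamma>))\<bar> \<le> L * \<bar>max u 0 / (1 + \<gamma>) - max v 0 / (1 + \<gamma>)\<bar>"
    by (rule h_lip)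
  also have "\<bar>max u 0 / (1 + \<gamma>) - max v 0 / (1 + \<gamma>)\<bar> = \<bar>max u 0 - max v 0\<bar> / (1 + \<gamma>)"
    using gam by (simp add: diff_divide_distrib[symmetric])
  also have "\<dots> \<le> \<bar>u - v\<bar> / (1 + \<gamma>)"
    using gam by (intro divide_right_mono) auto
  finally have *: "\<bar>h (max u 0 / (1 + \<gamma>)) - h (max v 0 / (1 + \<gamma>))\<bar> \<le> L * (\<bar>u - v\<bar> / (1 + \<gamma>))"
    using L by (simp add: mult_left_mono)
  have "\<bar>S u - S v\<bar> \<le> \<bar>(h (max u 0 / (1 + \<gamma>)) - Az) / (2 * L) - (h (max v 0 / (1 + \<gamma>)) - Az) / (2 * L)\<bar>"
    unfolding S_def by linarith
  also have "\<dots> = \<bar>h (max u 0 / (1 + \<gamma>)) - h (max v 0 / (1 + \<gamma>))\<bar> / (2 * L)"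
    using L by (simp add: diff_divide_distrib[symmetric])
  also have "\<dots> \<le> L * (\<bar>u - v\<bar> / (1 + \<gamma>)) / (2 * L)"
    using * L by (intro divide_right_mono) auto
  also have "\<dots> = \<bar>u - v\<bar> / (2 * (1 + \<gamma>))"
  proof -
    have "L * (\<bar>u - v\<bar> / (1 + \<gamma>)) / (2 * L) = \<bar>u - v\<bar> / (1 + \<gamma>) / 2" using L by simp
    then show ?thesis by simp
  qed
  finally show ?thesis .
qed

lemma S_cont: "continuous_on UNIV S"
  unfolding S_def using gam L
  by (intro continuous_intros continuous_on_compose2[OF h_cont]) auto

lemma phi_cont: "continuous_on UNIV phi"
  unfolding phi_def using gam
  by (intro continuous_intros continuous_on_compose2[OF h_cont] S_cont
        continuous_on_compose2[OF Yt_ct]) auto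

lemma phi_mono: assumes "u \<le> v" shows "phi u \<le> phi v"
proof -
  have "Yt c (2 * L * max (- v) 0 / (1 + \<gamma>)) \<le> Yt c (2 * L * max (- u) 0 / (1 + \<gamma>))"
    by (rule Yt_mn) (use assms gam L in \<open>auto intro!: divide_right_mono mult_left_mono\<close>)
  moreover have "min (M * (u - us)) (S u) \<le> min (M * (v - us)) (S v)"
  proof -
    have "M * (u - us) \<le> M * (v - us)" using M_pos assms by simp
    then show ?thesis using S_mono[OF assms] by (auto simp: min_def)
  qed
  ultimately show ?thesis unfolding phi_def by linarith
qed

lemma phi_le: "phi u \<le> M * (u - us)"
  using Yt_nn unfolding phi_def by (smt (verit))

lemma phi_pos_side: "u \<ge> 0 \<Longrightarrow> phi u = min (M * (u - us)) (S u)"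
  by (simp add: phi_def Yt_zero)

lemma phi_nonneg: "u \<ge> us \<Longrightarrow> phi u \<ge> 0"
  using us_pos M_pos S_nonneg[of u] by (simp add: phi_pos_side)

lemma phi_between: "0 \<le> u \<Longrightarrow> u \<le> us \<Longrightarrow> phi u = M * (u - us)"
proof -
  assume "0 \<le> u" "u \<le> us"
  then have "M * (u - us) \<le> 0" using M_pos by (simp add: mult_nonneg_nonpos)
  then show ?thesis using \<open>0 \<le> u\<close> S_nonneg[of u] by (simp add: phi_pos_side)
qed

lemma phi_0: "phi 0 = - a" using phi_between[of 0] us_pos M_us by simp

lemma phi_neg: assumes "s \<ge> 0" shows "- phi (- s) = a + M * s + Yt c (2 * L * s / (1 + \<gamma>))"
proof -
  have "M * (- s - us) \<le> 0" using M_pos us_pos assms by (simp add: mult_nonneg_nonpos)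
  then have "min (M * (- s - us)) (S (- s)) = M * (- s - us)" using S_nonneg[of "-s"] by simp
  then show ?thesis using assms M_us by (simp add: phi_def algebra_simps)
qed

lemma phi_ge: "t \<ge> 0 \<Longrightarrow> phi t \<ge> - a"
  using phi_mono[of 0 t] phi_0 by simp

lemma max_phi_le_S: "t \<ge> 0 \<Longrightarrow> max (phi t) 0 \<le> S t"
  using S_nonneg[of t] by (simp add: phi_pos_side)

lemma LS: "t \<ge> 0 \<Longrightarrow> L * S t = max 0 ((h (t / (1 + \<gamma>)) - Az) / 2)"
  using L unfolding S_def by (simp add: max_mult_distrib_left)

lemma phi_tends: "\<exists>R\<ge>us. phi R \<ge> B"
proof -
  obtain R0 where R0: "\<forall>p\<ge>R0. h p \<ge> Az + 2 * L * B" using h_coerc by blast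
  define R where "R = max us (max (B / M + us) (R0 * (1 + \<gamma>)))"
  have R: "R \<ge> us" "R \<ge> B / M + us" "R \<ge> R0 * (1 + \<gamma>)" by (auto simp: R_def)
  have "M * (R - us) \<ge> B" using R(2) M_pos by (simp add: field_simps)
  moreover have "S R \<ge> B"
  proof -
    have "R / (1 + \<gamma>) \<ge> R0" using R(3) gam by (simp add: field_simps)
    then have "h (R / (1 + \<gamma>)) \<ge> Az + 2 * L * B" using R0 by blast
    then have "(h (max R 0 / (1 + \<gamma>)) - Az) / (2 * L) \<ge> B" using L R(1) us_pos by (simp add: field_simps)
    then show ?thesis unfolding S_def by linarith
  qed
  ultimately show ?thesis using R(1) us_pos by (intro exI[of _ R]) (simp add: phi_pos_side)
qed

definition "cphi K = a\<^sup>2 / 2 + 1 / 2 + 2 * L * ell c (2 * L * K)"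

lemma phi_lip:
  assumes "\<bar>u\<bar> \<le> K" "\<bar>v\<bar> \<le> K"
  shows "\<bar>phi u - phi v\<bar> \<le> cphi K / \<gamma> * \<bar>u - v\<bar>"
proof -
  have g1: "1 + \<gamma> \<ge> 1" using gam by simp
  have K0: "K \<ge> 0" using assms by simp
  define yu where "yu = 2 * L * max (- u) 0 / (1 + \<gamma>)"
  define yv where "yv = 2 * L * max (- v) 0 / (1 + \<gamma>)"
  have yK: "yu \<le> 2 * L * K" "yv \<le> 2 * L * K"
  proof -
    have "2 * L * max (- u) 0 \<le> 2 * L * K" using assms L by (intro mult_left_mono) auto
    then show "yu \<le> 2 * L * K" unfolding yu_def using g1 L K0
      by (smt (verit) divide_right_mono divide_nonneg_nonneg div_by_1 frac_le mult_nonneg_nonneg)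
    have "2 * L * max (- v) 0 \<le> 2 * L * K" using assms L by (intro mult_left_mono) auto
    then show "yv \<le> 2 * L * K" unfolding yv_def using g1 L K0
      by (smt (verit) divide_right_mono divide_nonneg_nonneg div_by_1 frac_le mult_nonneg_nonneg)
  qed
  have Y: "\<bar>Yt c yu - Yt c yv\<bar> \<le> ell c (2 * L * K) * \<bar>yu - yv\<bar>"
    by (rule Yt_lp[OF yK])
  have "\<bar>yu - yv\<bar> = 2 * L * \<bar>max (- u) 0 - max (- v) 0\<bar> / (1 + \<gamma>)"
    unfolding yu_def yv_def using L gam by (simp add: diff_divide_distrib[symmetric] abs_mult right_diff_distrib[symmetric])
  also have "\<dots> \<le> 2 * L * \<bar>u - v\<bar> / (1 + \<gamma>)"
    using L gam by (intro divide_right_mono mult_left_mono) auto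
  also have "\<dots> \<le> 2 * L * \<bar>u - v\<bar> / \<gamma>"
    using L gam by (intro divide_left_mono) auto
  finally have yy: "\<bar>yu - yv\<bar> \<le> 2 * L * \<bar>u - v\<bar> / \<gamma>" .
  have Y2: "\<bar>Yt c yu - Yt c yv\<bar> \<le> ell c (2 * L * K) * (2 * L * \<bar>u - v\<bar> / \<gamma>)"
    using Y yy ell_nn[of "2 * L * K"] by (meson mult_left_mono order_trans)
  have Sl: "\<bar>S u - S v\<bar> \<le> \<bar>u - v\<bar> / (2 * \<gamma>)"
    using S_lip[of u v] gam by (smt (verit) divide_left_mono mult_pos_pos zero_le_divide_iff abs_ge_zero)
  have Ml: "\<bar>M * (u - us) - M * (v - us)\<bar> = a\<^sup>2 / 2 / \<gamma> * \<bar>u - v\<bar>"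
  proof -
    have "M * (u - us) - M * (v - us) = M * (u - v)" by (simp add: algebra_simps)
    then have "\<bar>M * (u - us) - M * (v - us)\<bar> = M * \<bar>u - v\<bar>" using M_pos by (simp add: abs_mult)
    then show ?thesis by (simp add: M_def)
  qed
  have mn: "\<bar>min (M * (u - us)) (S u) - min (M * (v - us)) (S v)\<bar>
      \<le> \<bar>M * (u - us) - M * (v - us)\<bar> + \<bar>S u - S v\<bar>" by linarith
  have "\<bar>phi u - phi v\<bar> \<le> \<bar>min (M * (u - us)) (S u) - min (M * (v - us)) (S v)\<bar> + \<bar>Yt c yu - Yt c yv\<bar>"
    unfolding phi_def yu_def yv_def by linarith
  also have "\<dots> \<le> a\<^sup>2 / 2 / \<gamma> * \<bar>u - v\<bar> + \<bar>u - v\<bar> / (2 * \<gamma>) + ell c (2 * L * K) * (2 * L * \<bar>u - v\<bar> / \<gamma>)"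
    using mn Ml Sl Y2 by linarith
  also have "\<dots> = cphi K / \<gamma> * \<bar>u - v\<bar>"
    unfolding cphi_def using gam by (simp add: field_simps)
  finally show ?thesis .
qed

end




lemma DERIV_same_diff:
  fixes f g :: "real \<Rightarrow> real"
  assumes "a \<le> b" "\<And>x. a \<le> x \<Longrightarrow> x \<le> b \<Longrightarrow> DERIV f x :> d x"
    "\<And>x. a \<le> x \<Longrightarrow> x \<le> b \<Longrightarrow> DERIV g x :> d x"
  shows "f b - g b = f a - g a"
proof -
  have D: "DERIV (\<lambda>x. f x - g x) x :> 0" if "a \<le> x" "x \<le> b" for x
    using DERIV_diff[OF assms(2)[OF that] assms(3)[OF that]] by simp
  have "(\<lambda>x. f x - g x) a \<le> (\<lambda>x. f x - g x) b"
    by (rule DERIV_nonneg_imp_nondecreasing[OF assms(1)]) (use D in auto)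
  moreover have "(\<lambda>x. f x - g x) a \<ge> (\<lambda>x. f x - g x) b"
    by (rule DERIV_nonpos_imp_nonincreasing[OF assms(1)]) (use D in auto)
  ultimately show ?thesis by simp
qed

context vt begin

definition "Phi = prim phi us"
definition "V = prim (\<lambda>u. max (phi u) 0) us"

lemma Phi_deriv: "DERIV Phi u :> phi u"
  unfolding Phi_def by (rule prim_deriv[OF phi_cont])

lemma V_deriv: "DERIV V u :> max (phi u) 0"
  unfolding V_def by (rule prim_deriv) (intro continuous_intros phi_cont)

lemma Phi_us: "Phi us = 0" by (simp add: Phi_def)
lemma V_us: "V us = 0" by (simp add: V_def)

lemma P_deriv: "DERIV (\<lambda>x. M * (x - us)\<^sup>2 / 2) x :> M * (x - us)"
  by (auto intro!: derivative_eq_intros)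

lemma Phi_between: assumes "0 \<le> u" "u \<le> us" shows "Phi u = M * (u - us)\<^sup>2 / 2"
proof -
  have "Phi us - M * (us - us)\<^sup>2 / 2 = Phi u - M * (u - us)\<^sup>2 / 2"
  proof (rule DERIV_same_diff[OF assms(2), where d = "\<lambda>x. M * (x - us)"])
    fix x assume "u \<le> x" "x \<le> us"
    then show "DERIV Phi x :> M * (x - us)" using Phi_deriv[of x] phi_between[of x] assms by simp
  qed (rule P_deriv)
  then show ?thesis using Phi_us by simp
qed

lemma Phi_0: "Phi 0 = \<gamma>"
  using Phi_between[of 0] us_pos M_us2 by simp

lemma Phi_quad_ge: assumes "u \<le> us" shows "Phi u \<ge> M * (u - us)\<^sup>2 / 2"
proof -
  have "(\<lambda>x. Phi x - M * (x - us)\<^sup>2 / 2) u \<ge> (\<lambda>x. Phi x - M * (x - us)\<^sup>2 / 2) us"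
  proof (rule DERIV_nonpos_imp_nonincreasing[OF assms])
    fix x show "\<exists>y. DERIV (\<lambda>x. Phi x - M * (x - us)\<^sup>2 / 2) x :> y \<and> y \<le> 0"
      using DERIV_diff[OF Phi_deriv P_deriv, of x] phi_le[of x] by auto
  qed
  then show ?thesis using Phi_us by simp
qed

lemma phi_nonpos: "x \<le> us \<Longrightarrow> phi x \<le> 0"
proof -
  assume "x \<le> us"
  then have "M * (x - us) \<le> 0" using M_pos by (intro mult_nonneg_nonpos) auto
  then show ?thesis using phi_le[of x] by linarith
qed

lemma Phi_anti: assumes "u \<le> v" "v \<le> us" shows "Phi v \<le> Phi u"
proof (rule DERIV_nonpos_imp_nonincreasing[OF assms(1)])
  fix x assume "u \<le> x" "x \<le> v"
  then show "\<exists>y. DERIV Phi x :> y \<and> y \<le> 0"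
    using Phi_deriv[of x] phi_nonpos[of x] assms by auto
qed

lemma Phi_mono_r: assumes "us \<le> u" "u \<le> v" shows "Phi u \<le> Phi v"
proof (rule DERIV_nonneg_imp_nondecreasing[OF assms(2)])
  fix x assume "u \<le> x" "x \<le> v"
  then show "\<exists>y. DERIV Phi x :> y \<and> y \<ge> 0"
    using Phi_deriv[of x] phi_nonneg[of x] assms by auto
qed

lemma Phi_nonneg: "Phi u \<ge> 0"
  using Phi_anti[of u us] Phi_mono_r[of us u] Phi_us by (cases "u \<le> us") auto

lemma V_zero: assumes "t \<le> us" shows "V t = 0"
proof -
  have "V us - 0 = V t - 0"
  proof (rule DERIV_same_diff[OF assms, where d = "\<lambda>_. 0"])
    fix x assume "t \<le> x" "x \<le> us"
    then have "max (phi x) 0 = 0" using phi_nonpos[of x] by simp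
    then show "DERIV V x :> 0" using V_deriv[of x] by simp
  qed auto
  then show ?thesis using V_us by simp
qed

lemma V_mono: assumes "t \<le> t'" shows "V t \<le> V t'"
proof (rule DERIV_nonneg_imp_nondecreasing[OF assms])
  fix x show "\<exists>y. DERIV V x :> y \<and> y \<ge> 0" using V_deriv[of x] by auto
qed

lemma V_nonneg: "V t \<ge> 0"
  using V_mono[of t us] V_mono[of us t] V_zero[of t] V_us by (cases "t \<le> us") auto

lemma V_eq: assumes "us \<le> t" shows "V t = Phi t"
proof -
  have "V t - Phi t = V us - Phi us"
  proof (rule DERIV_same_diff[OF assms, where d = phi])
    fix x assume "us \<le> x" "x \<le> t"
    then have "max (phi x) 0 = phi x" using phi_nonneg[of x] by simp
    then show "DERIV V x :> phi x" using V_deriv[of x] by simp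
  qed (rule Phi_deriv)
  then show ?thesis using V_us Phi_us by simp
qed

lemma V_le_Phi: "V t \<le> Phi t"
  using V_zero[of t] V_eq[of t] Phi_nonneg[of t] by (cases "t \<le> us") auto

lemma Phi_V_gam: assumes "t \<ge> 0" shows "Phi t - V t \<le> \<gamma>"
proof (cases "t \<le> us")
  case True
  then show ?thesis using V_zero[of t] Phi_anti[of 0 t] assms Phi_0 by auto
next
  case False
  then show ?thesis using V_eq[of t] gam by auto
qed

lemma V_lower: assumes "us \<le> R" "R \<le> r" shows "V r \<ge> (r - R) * phi R"
proof -
  have "(\<lambda>x. V x - (x - R) * phi R) R \<le> (\<lambda>x. V x - (x - R) * phi R) r"
  proof (rule DERIV_nonneg_imp_nondecreasing[OF assms(2)])
    fix x assume x: "R \<le> x" "x \<le> r"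
    have d0: "DERIV (\<lambda>x. (x - R) * phi R) x :> 1 * phi R"
      by (auto intro!: derivative_eq_intros)
    have d: "DERIV (\<lambda>x. V x - (x - R) * phi R) x :> max (phi x) 0 - 1 * phi R"
      by (rule DERIV_diff[OF V_deriv d0])
    have "phi R \<le> phi x" using phi_mono x by simp
    then show "\<exists>y. DERIV (\<lambda>x. V x - (x - R) * phi R) x :> y \<and> y \<ge> 0"
      using d by (intro exI[of _ "max (phi x) 0 - 1 * phi R"]) auto
  qed
  then show ?thesis using V_nonneg[of R] by simp
qed

lemma Phi_neg_ge: assumes "s \<ge> 0" shows "Phi (- s) \<ge> M * s\<^sup>2 / 2" "Phi (- s) \<ge> \<gamma>"
proof -
  have "Phi (- s) \<ge> M * (- s - us)\<^sup>2 / 2" using Phi_quad_ge[of "-s"] us_pos assms by simp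
  moreover have "(- s - us)\<^sup>2 \<ge> s\<^sup>2"
  proof -
    have "(- s - us)\<^sup>2 = (s + us)\<^sup>2" by (simp add: power2_eq_square algebra_simps)
    also have "\<dots> \<ge> s\<^sup>2" using assms us_pos by (intro power_mono) auto
    finally show ?thesis .
  qed
  then have "M * (- s - us)\<^sup>2 / 2 \<ge> M * s\<^sup>2 / 2" using M_pos by simp
  ultimately show "Phi (- s) \<ge> M * s\<^sup>2 / 2" by linarith
  show "Phi (- s) \<ge> \<gamma>" using Phi_anti[of "-s" 0] assms us_pos Phi_0 by simp
qed

end



lemma DERIV_hd:
  fixes f :: "real \<Rightarrow> real"
  assumes "\<And>x. DERIV f x :> f' x" "(g has_derivative g') (at z within X)"
  shows "((\<lambda>w. f (g w)) has_derivative (\<lambda>h. f' (g z) * g' h)) (at z within X)"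
  using has_derivative_compose[OF assms(2) assms(1)[of "g z", unfolded has_field_derivative_def]]
  by simp

lemma hd_partial:
  fixes F :: "real \<times> real \<Rightarrow> real"
  assumes "(F has_derivative (\<lambda>h. fst h * A + snd h * B)) (at (s, t))"
  shows "DERIV (\<lambda>\<sigma>. F (\<sigma>, t)) s :> A" "DERIV (\<lambda>\<tau>. F (s, \<tau>)) t :> B"
proof -
  have p1: "((\<lambda>\<sigma>. (\<sigma>, t)) has_derivative (\<lambda>h. (h, 0))) (at s)"
    by (auto intro!: derivative_eq_intros)
  have p2: "((\<lambda>\<tau>. (s, \<tau>)) has_derivative (\<lambda>h. (0, h))) (at t)"
    by (auto intro!: derivative_eq_intros)
  have "((\<lambda>\<sigma>. F (\<sigma>, t)) has_derivative (\<lambda>h. fst (h, 0::real) * A + snd (h, 0::real) * B)) (at s)"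
    using has_derivative_compose[OF p1 assms] by simp
  moreover have "(\<lambda>h::real. h * A) = (*) A" by (rule ext) (simp add: mult.commute)
  ultimately show "DERIV (\<lambda>\<sigma>. F (\<sigma>, t)) s :> A"
    unfolding has_field_derivative_def by simp
  have "((\<lambda>\<tau>. F (s, \<tau>)) has_derivative (\<lambda>h. fst (0::real, h) * A + snd (0::real, h) * B)) (at t)"
    using has_derivative_compose[OF p2 assms] by simp
  moreover have "(\<lambda>h::real. h * B) = (*) B" by (rule ext) (simp add: mult.commute)
  ultimately show "DERIV (\<lambda>\<tau>. F (s, \<tau>)) t :> B"
    unfolding has_field_derivative_def by simp
qed

context vt begin

definition "Fs s t = Phi (t - s) - Phi t + V t"
definition "Fc s t = Phi (- s) - \<gamma> + V t + s * t / (1 + \<gamma>)"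
definition "Fab \<alpha> \<beta> s t = (if \<alpha> = \<beta> then Fs s t else Fc s t)"
definition "Gf x y = Fab (fst x) (fst y) (snd x) (snd y)"
definition "Dss s t = - phi (t - s)"
definition "Dst s t = phi (t - s) - min (phi t) 0"
definition "Dcs s t = - phi (- s) + t / (1 + \<gamma>)"
definition "Dct s t = max (phi t) 0 + s / (1 + \<gamma>)"
definition "Ds \<alpha> \<beta> s t = (if \<alpha> = \<beta> then Dss s t else Dcs s t)"
definition "Dt \<alpha> \<beta> s t = (if \<alpha> = \<beta> then Dst s t else Dct s t)"

lemma Fs_hd: "((\<lambda>w. Fs (fst w) (snd w)) has_derivative
    (\<lambda>h. fst h * Dss (fst z) (snd z) + snd h * Dst (fst z) (snd z))) (at z within X)"
proof -
  have i: "((\<lambda>w. w) has_derivative (\<lambda>h. h)) (at z within X)" by (rule has_derivative_ident)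
  have f: "((\<lambda>w. fst w) has_derivative (\<lambda>h. fst h)) (at z within X)"
    using has_derivative_fst[OF i] .
  have s: "((\<lambda>w. snd w) has_derivative (\<lambda>h. snd h)) (at z within X)"
    using has_derivative_snd[OF i] .
  have d: "((\<lambda>w. snd w - fst w) has_derivative (\<lambda>h. snd h - fst h)) (at z within X)"
    by (rule has_derivative_diff[OF s f])
  have "((\<lambda>w. Phi (snd w - fst w) - Phi (snd w) + V (snd w)) has_derivative
      (\<lambda>h. phi (snd z - fst z) * (snd h - fst h) - phi (snd z) * snd h + max (phi (snd z)) 0 * snd h)) (at z within X)"
    by (intro has_derivative_add has_derivative_diff DERIV_hd[OF Phi_deriv d]
          DERIV_hd[OF Phi_deriv s] DERIV_hd[OF V_deriv s])
  then show ?thesis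
    unfolding Fs_def Dss_def Dst_def
    by (rule has_derivative_eq_rhs) (auto simp: algebra_simps max_def min_def)
qed

lemma Fc_hd: "((\<lambda>w. Fc (fst w) (snd w)) has_derivative
    (\<lambda>h. fst h * Dcs (fst z) (snd z) + snd h * Dct (fst z) (snd z))) (at z within X)"
proof -
  have i: "((\<lambda>w. w) has_derivative (\<lambda>h. h)) (at z within X)" by (rule has_derivative_ident)
  have f: "((\<lambda>w. fst w) has_derivative (\<lambda>h. fst h)) (at z within X)"
    using has_derivative_fst[OF i] .
  have s: "((\<lambda>w. snd w) has_derivative (\<lambda>h. snd h)) (at z within X)"
    using has_derivative_snd[OF i] .
  have d: "((\<lambda>w. - fst w) has_derivative (\<lambda>h. - fst h)) (at z within X)"
    by (rule has_derivative_minus[OF f])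
  have m: "((\<lambda>w. fst w * snd w / (1 + \<gamma>)) has_derivative
      (\<lambda>h. (fst z * snd h + fst h * snd z) / (1 + \<gamma>))) (at z within X)"
  proof -
    have "((\<lambda>w. fst w * snd w * (1 / (1 + \<gamma>))) has_derivative
      (\<lambda>h. (fst z * snd h + fst h * snd z) * (1 / (1 + \<gamma>)))) (at z within X)"
      by (intro has_derivative_mult_left has_derivative_mult[OF f s])
    then show ?thesis by simp
  qed
  have "((\<lambda>w. Phi (- fst w) - \<gamma> + V (snd w) + fst w * snd w / (1 + \<gamma>)) has_derivative
      (\<lambda>h. phi (- fst z) * (- fst h) - 0 + max (phi (snd z)) 0 * snd h + (fst z * snd h + fst h * snd z) / (1 + \<gamma>))) (at z within X)"
    by (intro has_derivative_add has_derivative_diff DERIV_hd[OF Phi_deriv d]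
          has_derivative_const DERIV_hd[OF V_deriv s] m)
  then show ?thesis
    unfolding Fc_def Dcs_def Dct_def
    by (rule has_derivative_eq_rhs) (auto simp: algebra_simps add_divide_distrib)
qed

lemma Fab_hd: "((\<lambda>w. Fab \<alpha> \<beta> (fst w) (snd w)) has_derivative
    (\<lambda>h. fst h * Ds \<alpha> \<beta> (fst z) (snd z) + snd h * Dt \<alpha> \<beta> (fst z) (snd z))) (at z within X)"
  unfolding Fab_def Ds_def Dt_def by (cases "\<alpha> = \<beta>") (simp_all add: Fs_hd Fc_hd)

lemma Fab_ds: "DERIV (\<lambda>\<sigma>. Fab \<alpha> \<beta> \<sigma> t) s :> Ds \<alpha> \<beta> s t"
  using hd_partial(1)[OF Fab_hd[of \<alpha> \<beta> "(s, t)" UNIV]] by simp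

lemma Fab_dt: "DERIV (\<lambda>\<tau>. Fab \<alpha> \<beta> s \<tau>) t :> Dt \<alpha> \<beta> s t"
  using hd_partial(2)[OF Fab_hd[of \<alpha> \<beta> "(s, t)" UNIV]] by simp

lemma Fs0: "Fs 0 t = Fc 0 t" by (simp add: Fs_def Fc_def Phi_0)
lemma Fs0': "Fs s 0 = Fc s 0" using V_zero[of 0] us_pos by (simp add: Fs_def Fc_def Phi_0)

lemma G_jpt: "Gf (jpt \<alpha> s) (jpt \<beta> t) = Fab \<alpha> \<beta> s t"
  unfolding Gf_def jpt_def Fab_def using Fs0 Fs0' by auto

lemma dJ_jpt: assumes "s \<ge> 0" "t \<ge> 0"
  shows "dJ (jpt \<alpha> s) (jpt \<beta> t) = (if \<alpha> = \<beta> then \<bar>s - t\<bar> else s + t)"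
  using assms unfolding dJ_def jpt_def by auto

lemma bd_s: assumes "s \<ge> 0"
  shows "bderiv (\<lambda>x. Gf x (jpt \<beta> t)) \<alpha> s = Ds \<alpha> \<beta> s t"
proof (rule bderiv_eq[OF assms])
  have "((\<lambda>\<sigma>. Fab \<alpha> \<beta> \<sigma> t) has_real_derivative Ds \<alpha> \<beta> s t) (at s within {0..})"
    by (rule has_field_derivative_at_within[OF Fab_ds])
  then show "((\<lambda>\<sigma>. Gf (jpt \<alpha> \<sigma>) (jpt \<beta> t)) has_real_derivative Ds \<alpha> \<beta> s t) (at s within {0..})"
    by (simp add: G_jpt)
qed

lemma bd_t: assumes "t \<ge> 0"
  shows "bderiv (Gf (jpt \<alpha> s)) \<beta> t = Dt \<alpha> \<beta> s t"
proof (rule bderiv_eq[OF assms])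
  have "((\<lambda>\<tau>. Fab \<alpha> \<beta> s \<tau>) has_real_derivative Dt \<alpha> \<beta> s t) (at t within {0..})"
    by (rule has_field_derivative_at_within[OF Fab_dt])
  then show "((\<lambda>\<tau>. Gf (jpt \<alpha> s) (jpt \<beta> \<tau>)) has_real_derivative Dt \<alpha> \<beta> s t) (at t within {0..})"
    by (simp add: G_jpt)
qed

lemma J_jpt: "x \<in> J N \<Longrightarrow> x = jpt (fst x) (snd x) \<and> fst x < N \<and> snd x \<ge> 0"
  using N unfolding J_def jpt_def by auto

end



context vt begin

lemma FA_ge_A: "FA N H A p \<ge> A" by (simp add: FA_def)

lemma FA_ge_term: "\<beta> < N \<Longrightarrow> FA N H A p \<ge> H \<beta> (min (p \<beta>) 0)"
  unfolding FA_def by (rule max.coboundedI2) (rule Max_ge, auto)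

lemma FA_le: assumes "A \<le> B" "\<And>\<alpha>. \<alpha> < N \<Longrightarrow> H \<alpha> (min (p \<alpha>) 0) \<le> B"
  shows "FA N H A p \<le> B"
proof -
  have "0 \<in> {..<N}" using N by simp
  then have ne: "{..<N} \<noteq> {}" by blast
  have "Max ((\<lambda>\<alpha>. H \<alpha> (min (p \<alpha>) 0)) ` {..<N}) \<le> B"
    using assms(2) ne by (subst Max_le_iff) auto
  then show ?thesis using assms(1) by (simp add: FA_def)
qed

lemma H_upper: "\<alpha> < N \<Longrightarrow> H \<alpha> q \<le> Az + L * \<bar>q\<bar>"
  using Hlip[of \<alpha> q 0] H0[of \<alpha>] by auto

lemma h_Y: assumes "\<sigma> \<ge> 0" shows "h (a + Yt c \<sigma>) \<ge> Az + \<sigma>"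
proof (cases "\<sigma> \<le> 1")
  case True
  have "h a \<le> h (a + Yt c \<sigma>)" using a_pos Yt_nn[of \<sigma>] by (intro h_mono) auto
  then show ?thesis using ha True by linarith
next
  case False
  define n where "n = nat \<lfloor>\<sigma>\<rfloor> - 1"
  have n1: "real n + 1 \<le> \<sigma>" "\<sigma> < real n + 2" using False unfolding n_def by linarith+
  have "c n \<le> Yt c \<sigma>" by (rule Yt_gen[OF n1(1)])
  then have "h (a + c n) \<le> h (a + Yt c \<sigma>)" using a_pos c0[of n] by (intro h_mono) auto
  then show ?thesis using hc[of n] n1 by linarith
qed

lemma x_level_neg: assumes "\<alpha> < N" "s \<ge> 0" "P \<ge> - phi (- s)"
  shows "H \<alpha> P \<ge> Az + 2 * L * s / (1 + \<gamma>)" "H \<alpha> P \<ge> Az"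
proof -
  define \<sigma> where "\<sigma> = 2 * L * s / (1 + \<gamma>)"
  have s0: "\<sigma> \<ge> 0" using assms L gam by (simp add: \<sigma>_def)
  have P: "P \<ge> a + Yt c \<sigma>"
    using assms(3) phi_neg[OF assms(2)] M_pos assms(2) unfolding \<sigma>_def
    by (smt (verit) mult_nonneg_nonneg)
  have "h (a + Yt c \<sigma>) \<le> h P" using a_pos Yt_nn[of \<sigma>] P by (intro h_mono) auto
  also have "\<dots> \<le> H \<alpha> P" using h_le[OF assms(1)] P a_pos Yt_nn[of \<sigma>] by auto
  finally show "H \<alpha> P \<ge> Az + 2 * L * s / (1 + \<gamma>)" using h_Y[OF s0] unfolding \<sigma>_def by linarith
  then show "H \<alpha> P \<ge> Az" using s0 unfolding \<sigma>_def by linarith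
qed

lemma aux_max:
  fixes y A X Q x :: real
  assumes "y \<le> A + max 0 ((X - A) / 2) + Q / 2" "A + Q \<le> x" "X \<le> x" "Q \<ge> 0"
  shows "y \<le> x"
proof (cases "A \<le> X")
  case True
  then have "max 0 ((X - A) / 2) = (X - A) / 2" by simp
  then have "2 * y \<le> A + X + Q" using assms(1) by (simp add: field_simps)
  then show ?thesis using assms by linarith
next
  case False
  then have "max 0 ((X - A) / 2) = 0" by simp
  then have "2 * y \<le> 2 * A + Q" using assms(1) by (simp add: field_simps)
  then show ?thesis using assms by linarith
qed

lemma cross_ok: assumes "\<alpha> < N" "\<beta> < N" "s \<ge> 0" "t \<ge> 0"
  shows "H \<beta> (- Dct s t) \<le> H \<alpha> (Dcs s t)"
proof -
  have g1: "1 + \<gamma> > 0" using gam by simp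
  have tg: "t / (1 + \<gamma>) \<ge> 0" "s / (1 + \<gamma>) \<ge> 0" using assms g1 by auto
  have P0: "- phi (- s) \<ge> a" using phi_mono[of "-s" 0] phi_0 assms by simp
  have X1: "H \<alpha> (Dcs s t) \<ge> Az + 2 * L * s / (1 + \<gamma>)"
    by (rule x_level_neg(1)[OF assms(1,3)]) (use tg in \<open>simp add: Dcs_def\<close>)
  have X2: "H \<alpha> (Dcs s t) \<ge> h (t / (1 + \<gamma>))"
  proof -
    have "Dcs s t \<ge> t / (1 + \<gamma>)" using P0 a_pos by (simp add: Dcs_def)
    then have "h (t / (1 + \<gamma>)) \<le> h (Dcs s t)" using tg by (intro h_mono) auto
    also have "\<dots> \<le> H \<alpha> (Dcs s t)" using h_le[OF assms(1)] P0 a_pos tg by (auto simp: Dcs_def)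
    finally show ?thesis .
  qed
  have Dct0: "Dct s t \<ge> 0" using tg by (simp add: Dct_def)
  have "H \<beta> (- Dct s t) \<le> Az + L * Dct s t" using H_upper[OF assms(2), of "- Dct s t"] Dct0 by simp
  also have "\<dots> \<le> Az + L * S t + L * (s / (1 + \<gamma>))"
    using max_phi_le_S[OF assms(4)] L unfolding Dct_def by (simp add: distrib_left mult_left_mono)
  also have "\<dots> = Az + max 0 ((h (t / (1 + \<gamma>)) - Az) / 2) + (2 * L * s / (1 + \<gamma>)) / 2"
  proof -
    have "(2 * L * s / (1 + \<gamma>)) / 2 = L * (s / (1 + \<gamma>))" using gam by (auto simp: field_simps)
    then show ?thesis using LS[OF assms(4)] by linarith
  qed
  finally have Y: "H \<beta> (- Dct s t) \<le> Az + max 0 ((h (t / (1 + \<gamma>)) - Az) / 2) + (2 * L * s / (1 + \<gamma>)) / 2" .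
  have Q0: "2 * L * s / (1 + \<gamma>) \<ge> 0" using L assms g1 by simp
  show ?thesis by (rule aux_max[OF Y X1 X2 Q0])
qed

lemma same_ok: assumes "\<alpha> < N" "s \<ge> 0" "t \<ge> 0"
  shows "H \<alpha> (- Dst s t) \<le> H \<alpha> (Dss s t)"
proof (cases "phi t \<ge> 0")
  case True then show ?thesis by (simp add: Dst_def Dss_def)
next
  case False
  have "phi (t - s) \<le> phi t" using phi_mono assms by simp
  then have "0 \<le> - Dst s t" "- Dst s t \<le> Dss s t" using False by (auto simp: Dst_def Dss_def)
  then show ?thesis by (rule Hmono[OF assms(1)])
qed

lemma Dt_0t: "Dt \<alpha> \<beta> 0 t = max (phi t) 0"
  by (simp add: Dt_def Dst_def Dct_def max_def min_def)
lemma Ds_s0: "Ds \<alpha> \<beta> s 0 = - phi (- s)"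
  by (simp add: Ds_def Dss_def Dcs_def)
lemma Dt_s0_same: "Dt \<alpha> \<alpha> s 0 = phi (- s) + a"
  by (simp add: Dt_def Dst_def phi_0 min_def) (use a_pos in auto)
lemma Dt_s0_cross: "\<alpha> \<noteq> \<beta> \<Longrightarrow> Dt \<alpha> \<beta> s 0 = s / (1 + \<gamma>)"
  by (simp add: Dt_def Dct_def phi_0) (use a_pos in auto)
lemma Ds_0t_same: "Ds \<beta> \<beta> 0 t = - phi t"
  by (simp add: Ds_def Dss_def)

lemma grad_x: assumes "x \<in> J N" "y \<in> J N"
  shows "grad (\<lambda>x'. Gf x' y) x = (\<lambda>\<alpha>'. if snd x = 0 then Ds \<alpha>' (fst y) 0 (snd y) else Ds (fst x) (fst y) (snd x) (snd y))"
proof -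
  have y: "y = jpt (fst y) (snd y)" "snd y \<ge> 0" and x: "snd x \<ge> 0" using J_jpt assms by blast+
  have bd: "bderiv (\<lambda>x'. Gf x' y) \<alpha>' \<sigma> = Ds \<alpha>' (fst y) \<sigma> (snd y)" if "\<sigma> \<ge> 0" for \<alpha>' \<sigma>
    using bd_s[OF that, of "fst y" "snd y" \<alpha>'] y(1)[symmetric] by simp
  show ?thesis unfolding grad_def using bd x by auto
qed

lemma grad_y: assumes "x \<in> J N" "y \<in> J N"
  shows "grad (Gf x) y = (\<lambda>\<beta>'. if snd y = 0 then Dt (fst x) \<beta>' (snd x) 0 else Dt (fst x) (fst y) (snd x) (snd y))"
proof -
  have x: "x = jpt (fst x) (snd x)" and y: "snd y \<ge> 0" using J_jpt assms by blast+
  have bd: "bderiv (Gf x) \<beta>' \<tau> = Dt (fst x) \<beta>' (snd x) \<tau>" if "\<tau> \<ge> 0" for \<beta>' \<tau>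
    using bd_t[OF that, of "fst x" "snd x" \<beta>'] x[symmetric] by simp
  show ?thesis unfolding grad_def using bd y by auto
qed

lemma prop_iv: assumes "x \<in> J N" "y \<in> J N"
  shows "Hb N H (A0 N H + \<gamma>) y (\<lambda>\<beta>. - grad (Gf x) y \<beta>)
       - Hb N H (A0 N H + \<gamma>) x (grad (\<lambda>x'. Gf x' y) x) \<le> \<gamma>"
proof -
  obtain \<alpha> s where xs: "x = (\<alpha>, s)" by (cases x)
  obtain \<beta> t where yt: "y = (\<beta>, t)" by (cases y)
  have \<alpha>: "\<alpha> < N" "s \<ge> 0" "s = 0 \<Longrightarrow> \<alpha> = 0" using assms(1) xs N unfolding J_def by auto
  have \<beta>: "\<beta> < N" "t \<ge> 0" "t = 0 \<Longrightarrow> \<beta> = 0" using assms(2) yt N unfolding J_def by auto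
  note gx = grad_x[OF assms] and gy = grad_y[OF assms]
  note A = Az[symmetric]
  show ?thesis
  proof (cases "s = 0")
    case s0: True
    show ?thesis
    proof (cases "t = 0")
      case True
      have "FA N H (Az + \<gamma>) (\<lambda>\<beta>'. - Dt 0 \<beta>' 0 0) \<le> Az + \<gamma>"
      proof (rule FA_le)
        fix \<alpha>' assume "\<alpha>' < N"
        then have "H \<alpha>' 0 \<le> Az" by (rule H0)
        then show "H \<alpha>' (min (- Dt 0 \<alpha>' 0 0) 0) \<le> Az + \<gamma>" using gam phi_0 a_pos by (simp add: Dt_0t)
      qed simp
      moreover have "FA N H (Az + \<gamma>) (\<lambda>\<alpha>'. Ds \<alpha>' 0 0 0) \<ge> Az + \<gamma>" by (rule FA_ge_A)
      ultimately show ?thesis using s0 True \<alpha> \<beta> xs yt gx gy gam by (simp add: Hb_def A)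
    next
      case False
      have "H \<beta> (min (Ds \<beta> \<beta> 0 t) 0) \<le> FA N H (Az + \<gamma>) (\<lambda>\<alpha>'. Ds \<alpha>' \<beta> 0 t)"
        using FA_ge_term[OF \<beta>(1), of "\<lambda>\<alpha>'. Ds \<alpha>' \<beta> 0 t" "Az + \<gamma>"] by simp
      moreover have "- Dt 0 \<beta> 0 t = min (Ds \<beta> \<beta> 0 t) 0" by (simp add: Dt_0t Ds_0t_same)
      ultimately show ?thesis using s0 False \<alpha> \<beta> xs yt gx gy gam by (simp add: Hb_def A)
    qed
  next
    case sp: False
    show ?thesis
    proof (cases "t = 0")
      case True
      have X: "H \<alpha> (- phi (- s)) \<ge> Az + 2 * L * s / (1 + \<gamma>)" "H \<alpha> (- phi (- s)) \<ge> Az"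
        using x_level_neg[OF \<alpha>(1,2)] by auto
      have "FA N H (Az + \<gamma>) (\<lambda>\<beta>'. - Dt \<alpha> \<beta>' s 0) \<le> H \<alpha> (- phi (- s)) + \<gamma>"
      proof (rule FA_le)
        show "Az + \<gamma> \<le> H \<alpha> (- phi (- s)) + \<gamma>" using X by simp
        fix \<beta>' assume b': "\<beta>' < N"
        show "H \<beta>' (min (- Dt \<alpha> \<beta>' s 0) 0) \<le> H \<alpha> (- phi (- s)) + \<gamma>"
        proof (cases "\<beta>' = \<alpha>")
          case True
          have "phi (- s) \<le> phi 0" using phi_mono \<alpha> by simp
          then have "min (- Dt \<alpha> \<beta>' s 0) 0 = 0" using True by (simp add: Dt_s0_same phi_0)
          then show ?thesis using H0[OF b'] X gam by simp
        next
          case False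
          have g1: "1 + \<gamma> > 0" using gam by simp
          have "min (- Dt \<alpha> \<beta>' s 0) 0 = - (s / (1 + \<gamma>))"
            using Dt_s0_cross[of \<alpha> \<beta>' s] False \<alpha> g1 by (simp add: min_def)
          moreover have "H \<beta>' (- (s / (1 + \<gamma>))) \<le> Az + L * (s / (1 + \<gamma>))"
            using H_upper[OF b', of "- (s / (1 + \<gamma>))"] \<alpha> g1 by simp
          moreover have "L * (s / (1 + \<gamma>)) \<le> 2 * L * s / (1 + \<gamma>)"
          proof -
            have "L * (s / (1 + \<gamma>)) \<ge> 0" using L \<alpha> g1 by simp
            moreover have "2 * L * s / (1 + \<gamma>) = 2 * (L * (s / (1 + \<gamma>)))" by simp
            ultimately show ?thesis by linarith
          qed
          ultimately show ?thesis using X gam by simp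
        qed
      qed
      then show ?thesis using sp True \<alpha> \<beta> xs yt gx gy by (simp add: Hb_def A Ds_s0)
    next
      case tp: False
      have "H \<beta> (- Dt \<alpha> \<beta> s t) \<le> H \<alpha> (Ds \<alpha> \<beta> s t)"
        using same_ok[OF \<alpha>(1,2) \<beta>(2)] cross_ok[OF \<alpha>(1) \<beta>(1) \<alpha>(2) \<beta>(2)]
        by (cases "\<alpha> = \<beta>") (auto simp: Dt_def Ds_def)
      then show ?thesis using sp tp \<alpha> \<beta> xs yt gx gy gam by (simp add: Hb_def A)
    qed
  qed
qed

end



definition CKg :: "real \<Rightarrow> real \<Rightarrow> (nat \<Rightarrow> real) \<Rightarrow> real \<Rightarrow> real" where
  "CKg a L c K = 4 * (a\<^sup>2 / 2 + 1 / 2 + 2 * L * ell c (2 * L * K)) + a\<^sup>2 + 2"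

context vt begin

lemma CK_eq: "CKg a L c K = 4 * cphi K + a\<^sup>2 + 2" by (simp add: CKg_def cphi_def)

lemma cphi_nn: "cphi K \<ge> 0"
  unfolding cphi_def using ell_nn[of "2 * L * K"] L by simp

lemma Fab_cont2: "continuous_on X (\<lambda>z. Fab \<alpha> \<beta> (fst z) (snd z))"
proof -
  have "continuous (at z within X) (\<lambda>z. Fab \<alpha> \<beta> (fst z) (snd z))" for z
    by (rule has_derivative_continuous[OF Fab_hd])
  then show ?thesis by (simp add: continuous_on_eq_continuous_within)
qed

lemma phi_isCont: "isCont phi x" using phi_cont by (simp add: continuous_on_eq_continuous_at)

lemma phi_isCont2: "isCont (\<lambda>t. phi (t - s)) t" "isCont (\<lambda>s. phi (t - s)) s" "isCont (\<lambda>s. phi (- s)) s"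
  by (rule isCont_o2[OF _ phi_isCont], intro continuous_intros)+

lemma Dt_cont: "continuous_on X (\<lambda>t. Dt \<alpha> \<beta> s t)"
proof -
  have "isCont (\<lambda>t. Dt \<alpha> \<beta> s t) t" for t
    unfolding Dt_def Dst_def Dct_def
    by (cases "\<alpha> = \<beta>") (auto intro!: continuous_intros phi_isCont2 phi_isCont)
  then show ?thesis by (simp add: continuous_at_imp_continuous_on)
qed

lemma Ds_cont: "continuous_on X (\<lambda>s. Ds \<alpha> \<beta> s t)"
proof -
  have "isCont (\<lambda>s. Ds \<alpha> \<beta> s t) s" for s
    unfolding Ds_def Dss_def Dcs_def
    by (cases "\<alpha> = \<beta>") (auto intro!: continuous_intros phi_isCont2 phi_isCont)
  then show ?thesis by (simp add: continuous_at_imp_continuous_on)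
qed

lemma C1J_x: assumes "x \<in> J N" shows "C1J N (Gf x)"
proof -
  have x: "x = jpt (fst x) (snd x)" "snd x \<ge> 0" using J_jpt[OF assms] by auto
  define \<alpha> s where "\<alpha> = fst x" and "s = snd x"
  have xx: "Gf x = Gf (jpt \<alpha> s)" using x unfolding \<alpha>_def s_def by simp
  have s0: "s \<ge> 0" using x by (simp add: s_def)
  show ?thesis unfolding C1J_def xx
  proof (intro allI impI conjI)
    fix \<beta> assume "\<beta> < N"
    have "isCont (\<lambda>t. Fab \<alpha> \<beta> s t) t" for t by (rule DERIV_isCont[OF Fab_dt])
    then show "continuous_on {0..} (\<lambda>t. Gf (jpt \<alpha> s) (jpt \<beta> t))"
      by (simp add: G_jpt continuous_at_imp_continuous_on)
    show "((\<lambda>\<tau>. Gf (jpt \<alpha> s) (jpt \<beta> \<tau>)) has_real_derivative bderiv (Gf (jpt \<alpha> s)) \<beta> t) (at t within {0..})"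
      if "t \<ge> 0" for t
    proof -
      from that have "bderiv (Gf (jpt \<alpha> s)) \<beta> t = Dt \<alpha> \<beta> s t" by (rule bd_t)
      then show "((\<lambda>\<tau>. Gf (jpt \<alpha> s) (jpt \<beta> \<tau>)) has_real_derivative bderiv (Gf (jpt \<alpha> s)) \<beta> t) (at t within {0..})"
        using has_field_derivative_at_within[OF Fab_dt, of \<alpha> \<beta> s t "{0..}"] by (simp add: G_jpt)
    qed
    show "continuous_on {0..} (bderiv (Gf (jpt \<alpha> s)) \<beta>)"
      by (rule continuous_on_cong[THEN iffD1, OF refl _ Dt_cont[of _ \<alpha> \<beta> s]]) (simp add: bd_t)
  qed
qed

lemma C1J_y: assumes "y \<in> J N" shows "C1J N (\<lambda>x. Gf x y)"
proof -
  have y: "y = jpt (fst y) (snd y)" "snd y \<ge> 0" using J_jpt[OF assms] by auto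
  define \<beta> t where "\<beta> = fst y" and "t = snd y"
  have yy: "(\<lambda>x. Gf x y) = (\<lambda>x. Gf x (jpt \<beta> t))" using y unfolding \<beta>_def t_def by simp
  show ?thesis unfolding C1J_def yy
  proof (intro allI impI conjI)
    fix \<alpha> assume "\<alpha> < N"
    have "isCont (\<lambda>s. Fab \<alpha> \<beta> s t) s" for s by (rule DERIV_isCont[OF Fab_ds])
    then show "continuous_on {0..} (\<lambda>s. Gf (jpt \<alpha> s) (jpt \<beta> t))"
      by (simp add: G_jpt continuous_at_imp_continuous_on)
    show "((\<lambda>\<sigma>. Gf (jpt \<alpha> \<sigma>) (jpt \<beta> t)) has_real_derivative bderiv (\<lambda>x. Gf x (jpt \<beta> t)) \<alpha> s) (at s within {0..})"
      if "s \<ge> 0" for s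
    proof -
      from that have "bderiv (\<lambda>x. Gf x (jpt \<beta> t)) \<alpha> s = Ds \<alpha> \<beta> s t" by (rule bd_s)
      then show "((\<lambda>\<sigma>. Gf (jpt \<alpha> \<sigma>) (jpt \<beta> t)) has_real_derivative bderiv (\<lambda>x. Gf x (jpt \<beta> t)) \<alpha> s) (at s within {0..})"
        using has_field_derivative_at_within[OF Fab_ds, of \<alpha> \<beta> t s "{0..}"] by (simp add: G_jpt)
    qed
    show "continuous_on {0..} (bderiv (\<lambda>x. Gf x (jpt \<beta> t)) \<alpha>)"
      by (rule continuous_on_cong[THEN iffD1, OF refl _ Ds_cont[of _ \<alpha> \<beta> t]]) (simp add: bd_s)
  qed
qed

lemma Fs_nonneg: assumes "s \<ge> 0" shows "Fs s t \<ge> 0"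
proof (cases "t \<le> us")
  case True
  then show ?thesis using V_zero[of t] Phi_anti[of "t - s" t] assms by (simp add: Fs_def)
next
  case False
  then show ?thesis using V_eq[of t] Phi_nonneg[of "t - s"] by (simp add: Fs_def)
qed

lemma Fc_nonneg: assumes "s \<ge> 0" "t \<ge> 0" shows "Fc s t \<ge> 0"
  using Phi_neg_ge(2)[OF assms(1)] V_nonneg[of t] assms gam by (simp add: Fc_def)

lemma Fab_nonneg: "s \<ge> 0 \<Longrightarrow> t \<ge> 0 \<Longrightarrow> Fab \<alpha> \<beta> s t \<ge> 0"
  unfolding Fab_def using Fs_nonneg[of s t] Fc_nonneg[of s t] by simp

lemma G_nonneg: assumes "x \<in> J N" "y \<in> J N" shows "Gf x y \<ge> 0"
proof -
  have "snd x \<ge> 0" "snd y \<ge> 0" using J_jpt assms by blast+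
  then show ?thesis unfolding Gf_def by (rule Fab_nonneg)
qed

lemma G00: "Gf (0, 0) (0, 0) = 0"
  using V_zero[of 0] us_pos by (simp add: Gf_def Fab_def Fs_def)

lemma G_diag: assumes "x \<in> J N" shows "0 \<le> Gf x x \<and> Gf x x \<le> \<gamma>"
proof -
  have s: "snd x \<ge> 0" using J_jpt[OF assms] by auto
  have "Gf x x = \<gamma> - (Phi (snd x) - V (snd x))" by (simp add: Gf_def Fab_def Fs_def Phi_0)
  then show ?thesis using Phi_V_gam[OF s] V_le_Phi[of "snd x"] by simp
qed

end


context vt begin
definition "gg d = min (M * (d / 2)\<^sup>2 / 2) (V (d / 2)) - 2 * \<gamma>"

lemma gg_mono: "mono_on {0..} gg"
proof (rule mono_onI)
  fix d d' :: real assume "d \<in> {0..}" "d' \<in> {0..}" "d \<le> d'"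
  then have "(d / 2)\<^sup>2 \<le> (d' / 2)\<^sup>2" by (intro power_mono) auto
  then have "M * (d / 2)\<^sup>2 / 2 \<le> M * (d' / 2)\<^sup>2 / 2" using M_pos by simp
  moreover have "V (d / 2) \<le> V (d' / 2)" using V_mono \<open>d \<le> d'\<close> by simp
  ultimately show "gg d \<le> gg d'" unfolding gg_def by linarith
qed

lemma gg_le: assumes "s \<ge> 0" "t \<ge> 0" shows "gg (if \<alpha> = \<beta> then \<bar>s - t\<bar> else s + t) \<le> Fab \<alpha> \<beta> s t"
proof (cases "\<alpha> = \<beta>")
  case True
  define d where "d = \<bar>s - t\<bar>"
  have F: "Fab \<alpha> \<beta> s t \<ge> Phi (t - s) - \<gamma>" using True Phi_V_gam[OF assms(2)] by (simp add: Fab_def Fs_def)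
  show ?thesis
  proof (cases "t \<le> s")
    case ts: True
    have "Phi (- (s - t)) \<ge> M * (s - t)\<^sup>2 / 2" by (rule Phi_neg_ge(1)) (use ts in simp)
    moreover have "(d / 2)\<^sup>2 \<le> (s - t)\<^sup>2" using ts by (simp add: d_def power_mono)
    then have "M * (d / 2)\<^sup>2 / 2 \<le> M * (s - t)\<^sup>2 / 2" using M_pos by simp
    ultimately show ?thesis using F True gam unfolding gg_def d_def[symmetric] by (simp add: min_le_iff_disj)
  next
    case ts: False
    have "V (d / 2) \<le> V (t - s)" using ts by (intro V_mono) (simp add: d_def)
    then have "V (d / 2) \<le> Phi (t - s)" using V_le_Phi[of "t - s"] by linarith
    then show ?thesis using F True gam unfolding gg_def d_def[symmetric] by (simp add: min_le_iff_disj)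
  qed
next
  case False
  define d where "d = s + t"
  have F: "Fab \<alpha> \<beta> s t \<ge> Phi (- s) - \<gamma> + V t"
    using False assms gam by (simp add: Fab_def Fc_def)
  show ?thesis
  proof (cases "t \<le> s")
    case ts: True
    have "(d / 2)\<^sup>2 \<le> s\<^sup>2" using ts assms by (intro power_mono) (auto simp: d_def)
    then have "M * (d / 2)\<^sup>2 / 2 \<le> M * s\<^sup>2 / 2" using M_pos by simp
    then show ?thesis using F False Phi_neg_ge(1)[OF assms(1)] V_nonneg[of t] gam
      unfolding gg_def d_def[symmetric] by (simp add: min_le_iff_disj)
  next
    case ts: False
    have "V (d / 2) \<le> V t" using ts by (intro V_mono) (simp add: d_def)
    then show ?thesis using F False Phi_neg_ge(2)[OF assms(1)] gam
      unfolding gg_def d_def[symmetric] by (simp add: min_le_iff_disj)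
  qed
qed

lemma gg_lim: "filterlim (\<lambda>d. gg d / d) at_top at_top"
  unfolding filterlim_at_top
proof
  fix Z :: real
  define B where "B = 4 * (\<bar>Z\<bar> + 2 * \<gamma> + 1)"
  have B0: "B \<ge> 0" using gam by (simp add: B_def)
  obtain R where R: "R \<ge> us" "phi R \<ge> B" using phi_tends by blast
  have R0: "R > 0" using R us_pos by simp
  define D0 where "D0 = max 1 (max (4 * R) (2 * B / M))"
  have "Z \<le> gg d / d" if d: "d \<ge> D0" for d
  proof -
    have d1: "d \<ge> 1" "d \<ge> 4 * R" "d \<ge> 2 * B / M" using d by (auto simp: D0_def)
    have dR: "d / 2 - R \<ge> d / 4" using d1 by simp
    have "V (d / 2) \<ge> (d / 2 - R) * phi R" by (rule V_lower[OF R(1)]) (use d1 R0 in simp)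
    moreover have "(d / 2 - R) * phi R \<ge> (d / 2 - R) * B" using R dR d1 by (intro mult_left_mono) auto
    moreover have "(d / 2 - R) * B \<ge> d / 4 * B" using dR B0 by (intro mult_right_mono) auto
    ultimately have V1: "V (d / 2) \<ge> d / 4 * B" by linarith
    have "M * d \<ge> 2 * B" using d1(3) M_pos by (simp add: field_simps)
    then have "M * d * d \<ge> 2 * B * d" using d1 by (intro mult_right_mono) auto
    then have M1: "M * (d / 2)\<^sup>2 / 2 \<ge> d / 4 * B" by (simp add: power2_eq_square field_simps)
    have "gg d \<ge> d / 4 * B - 2 * \<gamma>" using V1 M1 unfolding gg_def by linarith
    moreover have "d / 4 * B = d * (\<bar>Z\<bar> + 2 * \<gamma> + 1)" by (simp add: B_def)
    moreover have "d * (2 * \<gamma>) \<ge> 2 * \<gamma>" using d1 gam by simp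
    ultimately have "gg d \<ge> d * \<bar>Z\<bar> + d" by (simp add: algebra_simps)
    then have "Z * d \<le> gg d" using d1 by (smt (verit) abs_ge_self mult_right_mono mult.commute)
    then show ?thesis using d1 by (simp add: pos_le_divide_eq)
  qed
  then show "\<forall>\<^sub>F d in at_top. Z \<le> gg d / d" by (auto simp: eventually_at_top_linorder)
qed

lemma prop_v: "\<exists>g. mono_on {0..} g \<and> (\<forall>x\<in>J N. \<forall>y\<in>J N. g (dJ x y) \<le> Gf x y) \<and>
         filterlim (\<lambda>a. g a / a) at_top at_top"
proof (intro exI[of _ gg] conjI ballI gg_mono gg_lim)
  fix x y assume "x \<in> J N" "y \<in> J N"
  then have x: "x = jpt (fst x) (snd x)" "snd x \<ge> 0" and y: "y = jpt (fst y) (snd y)" "snd y \<ge> 0"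
    using J_jpt by blast+
  have dj: "dJ x y = (if fst x = fst y then \<bar>snd x - snd y\<bar> else snd x + snd y)"
    using dJ_jpt[OF x(2) y(2), of "fst x" "fst y"] x(1) y(1) by simp
  show "gg (dJ x y) \<le> Gf x y" unfolding Gf_def dj by (rule gg_le[OF x(2) y(2)])
qed

end



context vt begin

definition "CB K = \<bar>phi (- K)\<bar> + \<bar>phi K\<bar> + a + K"

lemma phi_absK: assumes "\<bar>u\<bar> \<le> K" shows "\<bar>phi u\<bar> \<le> \<bar>phi (- K)\<bar> + \<bar>phi K\<bar>"
proof -
  have "phi (- K) \<le> phi u" "phi u \<le> phi K" using assms by (auto intro!: phi_mono)
  then show ?thesis by linarith
qed

lemma D_bound:
  assumes "s \<ge> 0" "t \<ge> 0" "(if \<alpha> = \<beta> then \<bar>s - t\<bar> else s + t) \<le> K"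
  shows "\<bar>Ds \<alpha> \<beta> s t\<bar> \<le> CB K" "\<bar>Dt \<alpha> \<beta> s t\<bar> \<le> CB K"
proof -
  have g1: "1 + \<gamma> \<ge> 1" using gam by simp
  have "t / (1 + \<gamma>) \<le> t / 1" "s / (1 + \<gamma>) \<le> s / 1"
    using assms g1 by (intro divide_left_mono; simp)+
  then have tq: "t / (1 + \<gamma>) \<le> t" "s / (1 + \<gamma>) \<le> s" "t / (1 + \<gamma>) \<ge> 0" "s / (1 + \<gamma>) \<ge> 0"
    using assms g1 by auto
  have mn: "\<bar>min (phi t) 0\<bar> \<le> a" using phi_ge[OF assms(2)] a_pos by auto
  have a0: "a \<ge> 0" using a_pos by simp
  show "\<bar>Ds \<alpha> \<beta> s t\<bar> \<le> CB K"
  proof (cases "\<alpha> = \<beta>")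
    case True
    then have "\<bar>t - s\<bar> \<le> K" using assms by simp
    then have "\<bar>phi (t - s)\<bar> \<le> \<bar>phi (- K)\<bar> + \<bar>phi K\<bar>" by (rule phi_absK)
    moreover have "K \<ge> 0" using \<open>\<bar>t - s\<bar> \<le> K\<close> by simp
    ultimately show ?thesis using True a0 by (simp add: Ds_def Dss_def CB_def)
  next
    case False
    then have sK: "s \<le> K" "t \<le> K" using assms by auto
    then have "\<bar>phi (- s)\<bar> \<le> \<bar>phi (- K)\<bar> + \<bar>phi K\<bar>" using assms by (intro phi_absK) simp
    then show ?thesis using False a0 tq sK by (simp add: Ds_def Dcs_def CB_def)
  qed
  show "\<bar>Dt \<alpha> \<beta> s t\<bar> \<le> CB K"
  proof (cases "\<alpha> = \<beta>")
    case True
    then have "\<bar>t - s\<bar> \<le> K" using assms by simp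
    then have "\<bar>phi (t - s)\<bar> \<le> \<bar>phi (- K)\<bar> + \<bar>phi K\<bar>" by (rule phi_absK)
    moreover have "K \<ge> 0" using \<open>\<bar>t - s\<bar> \<le> K\<close> by simp
    ultimately show ?thesis using True mn by (simp add: Dt_def Dst_def CB_def)
  next
    case False
    then have sK: "s \<le> K" "t \<le> K" using assms by auto
    then have "\<bar>phi t\<bar> \<le> \<bar>phi (- K)\<bar> + \<bar>phi K\<bar>" using assms by (intro phi_absK) simp
    then have "\<bar>max (phi t) 0\<bar> \<le> \<bar>phi (- K)\<bar> + \<bar>phi K\<bar>" by linarith
    then show ?thesis using False a0 tq sK by (simp add: Dt_def Dct_def CB_def)
  qed
qed

lemma gnorm_le: assumes "\<And>\<beta>. \<beta> < N \<Longrightarrow> \<bar>p \<beta>\<bar> \<le> C" shows "gnorm N p \<le> C"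
proof -
  have "0 \<in> {..<N}" using N by simp
  then have ne: "{..<N} \<noteq> {}" by blast
  show ?thesis unfolding gnorm_def using assms ne by (subst Max_le_iff) auto
qed

lemma prop_vi: "\<forall>K\<ge>0. \<exists>C. \<forall>x\<in>J N. \<forall>y\<in>J N. dJ x y \<le> K \<longrightarrow>
        gnorm N (grad (\<lambda>x'. Gf x' y) x) + gnorm N (grad (Gf x) y) \<le> C"
proof (intro allI impI exI[of _ "2 * CB _"] ballI)
  fix K :: real and x y assume K: "K \<ge> 0" and xy: "x \<in> J N" "y \<in> J N" and d: "dJ x y \<le> K"
  have x: "x = jpt (fst x) (snd x)" "snd x \<ge> 0" and y: "y = jpt (fst y) (snd y)" "snd y \<ge> 0"
    using J_jpt xy by blast+
  have dj: "dJ x y = (if fst x = fst y then \<bar>snd x - snd y\<bar> else snd x + snd y)"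
    using dJ_jpt[OF x(2) y(2), of "fst x" "fst y"] x(1) y(1) by simp
  have g1: "gnorm N (grad (\<lambda>x'. Gf x' y) x) \<le> CB K"
  proof (rule gnorm_le)
    fix \<alpha>' assume "\<alpha>' < N"
    show "\<bar>grad (\<lambda>x'. Gf x' y) x \<alpha>'\<bar> \<le> CB K"
    proof (cases "snd x = 0")
      case True
      have "snd y \<le> K" using d dj True y(2) by (cases "fst x = fst y") auto
      then have "(if \<alpha>' = fst y then \<bar>0 - snd y\<bar> else 0 + snd y) \<le> K" using y(2) by auto
      then show ?thesis using D_bound(1)[of 0 "snd y" \<alpha>' "fst y" K] y(2) True
        by (simp add: grad_x[OF xy])
    next
      case False
      show ?thesis using D_bound(1)[OF x(2) y(2), of "fst x" "fst y" K] d dj False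
        by (simp add: grad_x[OF xy])
    qed
  qed
  have g2: "gnorm N (grad (Gf x) y) \<le> CB K"
  proof (rule gnorm_le)
    fix \<beta>' assume "\<beta>' < N"
    show "\<bar>grad (Gf x) y \<beta>'\<bar> \<le> CB K"
    proof (cases "snd y = 0")
      case True
      have "snd x \<le> K" using d dj True x(2) by (cases "fst x = fst y") auto
      then have "(if fst x = \<beta>' then \<bar>snd x - 0\<bar> else snd x + 0) \<le> K" using x(2) by auto
      then show ?thesis using D_bound(2)[of "snd x" 0 "fst x" \<beta>' K] x(2) True
        by (simp add: grad_y[OF xy])
    next
      case False
      show ?thesis using D_bound(2)[OF x(2) y(2), of "fst x" "fst y" K] d dj False
        by (simp add: grad_y[OF xy])
    qed
  qed
  show "gnorm N (grad (\<lambda>x'. Gf x' y) x) + gnorm N (grad (Gf x) y) \<le> 2 * CB K"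
    using g1 g2 by simp
qed

lemma tri4: "\<bar>(a1 + b1) - (a2 + b2)\<bar> \<le> \<bar>a1 - a2\<bar> + \<bar>(b1::real) - b2\<bar>"
  by linarith

lemma min_phi_pos: "t \<ge> 0 \<Longrightarrow> min (phi t) 0 = min (M * (t - us)) 0"
  using S_nonneg[of t] by (auto simp: phi_pos_side min_def)

lemma C11: assumes "K > 0" shows "C11_on N Gf K (CKg a L c K / \<gamma>)"
  unfolding C11_on_def
proof (intro allI impI conjI ballI)
  fix \<alpha> \<beta> assume "\<alpha> < N" "\<beta> < N"
  have pc: "z \<in> piece \<alpha> \<beta> K \<Longrightarrow> fst z \<ge> 0 \<and> snd z \<ge> 0 \<and> (if \<alpha> = \<beta> then \<bar>fst z - snd z\<bar> else fst z + snd z) \<le> K" for z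
    unfolding piece_def using dJ_jpt by auto
  have DG: "z \<in> piece \<alpha> \<beta> K \<Longrightarrow> DG Gf \<alpha> \<beta> z = (Ds \<alpha> \<beta> (fst z) (snd z), Dt \<alpha> \<beta> (fst z) (snd z))" for z
    using pc[of z] by (simp add: DG_def bd_s bd_t)
  fix z assume z: "z \<in> piece \<alpha> \<beta> K"
  show "((\<lambda>w. Gf (jpt \<alpha> (fst w)) (jpt \<beta> (snd w))) has_derivative
           (\<lambda>h. fst h * fst (DG Gf \<alpha> \<beta> z) + snd h * snd (DG Gf \<alpha> \<beta> z)))
           (at z within piece \<alpha> \<beta> K)"
    using Fab_hd[of \<alpha> \<beta> z "piece \<alpha> \<beta> K"] by (simp add: G_jpt DG[OF z])
next
  fix \<alpha> \<beta> z w assume ab: "\<alpha> < N" "\<beta> < N" and z: "z \<in> piece \<alpha> \<beta> K" and w: "w \<in> piece \<alpha> \<beta> K"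
  have pc: "z \<in> piece \<alpha> \<beta> K \<Longrightarrow> fst z \<ge> 0 \<and> snd z \<ge> 0 \<and> (if \<alpha> = \<beta> then \<bar>fst z - snd z\<bar> else fst z + snd z) \<le> K" for z
    unfolding piece_def using dJ_jpt by auto
  have DG: "z \<in> piece \<alpha> \<beta> K \<Longrightarrow> DG Gf \<alpha> \<beta> z = (Ds \<alpha> \<beta> (fst z) (snd z), Dt \<alpha> \<beta> (fst z) (snd z))" for z
    using pc[of z] by (simp add: DG_def bd_s bd_t)
  obtain s1 t1 where zz: "z = (s1, t1)" by (cases z)
  obtain s2 t2 where ww: "w = (s2, t2)" by (cases w)
  have P1: "s1 \<ge> 0" "t1 \<ge> 0" "(if \<alpha> = \<beta> then \<bar>s1 - t1\<bar> else s1 + t1) \<le> K" using pc[OF z] zz by auto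
  have P2: "s2 \<ge> 0" "t2 \<ge> 0" "(if \<alpha> = \<beta> then \<bar>s2 - t2\<bar> else s2 + t2) \<le> K" using pc[OF w] ww by auto
  define n where "n = norm (z - w)"
  have ds: "\<bar>s1 - s2\<bar> \<le> n" and dt: "\<bar>t1 - t2\<bar> \<le> n"
    using norm_fst_le[of "s1 - s2" "t1 - t2"] norm_snd_le[of "t1 - t2" "s1 - s2"] zz ww
    by (auto simp: n_def)
  have n0: "n \<ge> 0" by (simp add: n_def)
  define k where "k = cphi K / \<gamma>"
  have k0: "k \<ge> 0" using cphi_nn gam by (simp add: k_def)
  have g1: "1 + \<gamma> \<ge> 1" using gam by simp
  have inv: "\<bar>x1 - x2\<bar> / (1 + \<gamma>) \<le> n / \<gamma>" if "\<bar>x1 - x2\<bar> \<le> n" for x1 x2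
  proof -
    have "\<bar>x1 - x2\<bar> / (1 + \<gamma>) \<le> n / (1 + \<gamma>)" using that g1 by (intro divide_right_mono) auto
    also have "\<dots> \<le> n / \<gamma>" using gam n0 by (intro divide_left_mono) auto
    finally show ?thesis .
  qed
  have "norm (DG Gf \<alpha> \<beta> z - DG Gf \<alpha> \<beta> w) \<le> \<bar>Ds \<alpha> \<beta> s1 t1 - Ds \<alpha> \<beta> s2 t2\<bar> + \<bar>Dt \<alpha> \<beta> s1 t1 - Dt \<alpha> \<beta> s2 t2\<bar>"
  proof -
    have "DG Gf \<alpha> \<beta> z = (Ds \<alpha> \<beta> s1 t1, Dt \<alpha> \<beta> s1 t1)" using DG[OF z] zz by simp
    moreover have "DG Gf \<alpha> \<beta> w = (Ds \<alpha> \<beta> s2 t2, Dt \<alpha> \<beta> s2 t2)" using DG[OF w] ww by simp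
    ultimately show ?thesis using norm_Pair_le[of "Ds \<alpha> \<beta> s1 t1 - Ds \<alpha> \<beta> s2 t2" "Dt \<alpha> \<beta> s1 t1 - Dt \<alpha> \<beta> s2 t2"]
      by simp
  qed
  also have "\<dots> \<le> CKg a L c K / \<gamma> * n"
  proof (cases "\<alpha> = \<beta>")
    case True
    have u1: "\<bar>t1 - s1\<bar> \<le> K" "\<bar>t2 - s2\<bar> \<le> K" using P1 P2 True by auto
    have pu: "\<bar>phi (t1 - s1) - phi (t2 - s2)\<bar> \<le> k * (2 * n)"
    proof -
      have "\<bar>phi (t1 - s1) - phi (t2 - s2)\<bar> \<le> k * \<bar>(t1 - s1) - (t2 - s2)\<bar>"
        using phi_lip[OF u1] by (simp add: k_def)
      also have "\<dots> \<le> k * (2 * n)" using ds dt k0 by (intro mult_left_mono) auto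
      finally show ?thesis .
    qed
    have mm: "\<bar>min (phi t1) 0 - min (phi t2) 0\<bar> \<le> M * n"
    proof -
      have "\<bar>min (M * (t1 - us)) 0 - min (M * (t2 - us)) 0\<bar> \<le> \<bar>M * (t1 - us) - M * (t2 - us)\<bar>" by linarith
      also have "\<dots> = M * \<bar>t1 - t2\<bar>" using M_pos by (simp add: abs_mult right_diff_distrib[symmetric])
      also have "\<dots> \<le> M * n" using dt M_pos by simp
      finally show ?thesis using min_phi_pos[OF P1(2)] min_phi_pos[OF P2(2)] by simp
    qed
    have e1: "\<bar>Ds \<alpha> \<beta> s1 t1 - Ds \<alpha> \<beta> s2 t2\<bar> = \<bar>phi (t1 - s1) - phi (t2 - s2)\<bar>"
      using True by (simp add: Ds_def Dss_def abs_minus_commute)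
    have e2: "\<bar>Dt \<alpha> \<beta> s1 t1 - Dt \<alpha> \<beta> s2 t2\<bar> \<le> \<bar>phi (t1 - s1) - phi (t2 - s2)\<bar> + \<bar>min (phi t1) 0 - min (phi t2) 0\<bar>"
      using True tri4[of "phi (t1 - s1)" "- min (phi t1) 0" "phi (t2 - s2)" "- min (phi t2) 0"]
      by (simp add: Dt_def Dst_def abs_minus_commute)
    have "\<bar>Ds \<alpha> \<beta> s1 t1 - Ds \<alpha> \<beta> s2 t2\<bar> + \<bar>Dt \<alpha> \<beta> s1 t1 - Dt \<alpha> \<beta> s2 t2\<bar> \<le> k * (2 * n) + (k * (2 * n) + M * n)"
      unfolding e1 by (rule add_mono[OF pu order_trans[OF e2 add_mono[OF pu mm]]])
    also have "\<dots> = (4 * cphi K + a\<^sup>2 / 2) / \<gamma> * n"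
    proof -
      have e: "4 * k + M = (4 * cphi K + a\<^sup>2 / 2) / \<gamma>" by (simp add: k_def M_def add_divide_distrib)
      have "k * (2 * n) + (k * (2 * n) + M * n) = (4 * k + M) * n" by (simp add: algebra_simps)
      then show ?thesis by (simp only: e)
    qed
    also have "\<dots> \<le> CKg a L c K / \<gamma> * n"
      using gam n0 cphi_nn by (intro mult_right_mono divide_right_mono) (auto simp: CK_eq)
    finally show ?thesis .
  next
    case False
    have s12: "\<bar>- s1\<bar> \<le> K" "\<bar>- s2\<bar> \<le> K" "\<bar>t1\<bar> \<le> K" "\<bar>t2\<bar> \<le> K" using P1 P2 False by auto
    have p1: "\<bar>phi (- s1) - phi (- s2)\<bar> \<le> k * n"
    proof -
      have "\<bar>phi (- s1) - phi (- s2)\<bar> \<le> k * \<bar>- s1 - - s2\<bar>" using phi_lip[OF s12(1,2)] by (simp add: k_def)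
      also have "\<dots> \<le> k * n" using ds k0 by (intro mult_left_mono) auto
      finally show ?thesis .
    qed
    have p2: "\<bar>max (phi t1) 0 - max (phi t2) 0\<bar> \<le> k * n"
    proof -
      have "\<bar>max (phi t1) 0 - max (phi t2) 0\<bar> \<le> \<bar>phi t1 - phi t2\<bar>" by linarith
      also have "\<dots> \<le> k * \<bar>t1 - t2\<bar>" using phi_lip[OF s12(3,4)] by (simp add: k_def)
      also have "\<dots> \<le> k * n" using dt k0 by (intro mult_left_mono) auto
      finally show ?thesis .
    qed
    have q1: "\<bar>t1 / (1 + \<gamma>) - t2 / (1 + \<gamma>)\<bar> \<le> n / \<gamma>"
      using inv[OF dt] g1 by (simp add: diff_divide_distrib[symmetric])
    have q2: "\<bar>s1 / (1 + \<gamma>) - s2 / (1 + \<gamma>)\<bar> \<le> n / \<gamma>"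
      using inv[OF ds] g1 by (simp add: diff_divide_distrib[symmetric])
    have e1: "\<bar>Ds \<alpha> \<beta> s1 t1 - Ds \<alpha> \<beta> s2 t2\<bar> \<le> \<bar>phi (- s1) - phi (- s2)\<bar> + \<bar>t1 / (1 + \<gamma>) - t2 / (1 + \<gamma>)\<bar>"
      using False tri4[of "- phi (- s1)" "t1 / (1 + \<gamma>)" "- phi (- s2)" "t2 / (1 + \<gamma>)"]
      by (simp add: Ds_def Dcs_def abs_minus_commute)
    have e2: "\<bar>Dt \<alpha> \<beta> s1 t1 - Dt \<alpha> \<beta> s2 t2\<bar> \<le> \<bar>max (phi t1) 0 - max (phi t2) 0\<bar> + \<bar>s1 / (1 + \<gamma>) - s2 / (1 + \<gamma>)\<bar>"
      using False tri4[of "max (phi t1) 0" "s1 / (1 + \<gamma>)" "max (phi t2) 0" "s2 / (1 + \<gamma>)"]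
      by (simp add: Dt_def Dct_def)
    have "\<bar>Ds \<alpha> \<beta> s1 t1 - Ds \<alpha> \<beta> s2 t2\<bar> + \<bar>Dt \<alpha> \<beta> s1 t1 - Dt \<alpha> \<beta> s2 t2\<bar> \<le> (k * n + n / \<gamma>) + (k * n + n / \<gamma>)"
      by (rule add_mono[OF order_trans[OF e1 add_mono[OF p1 q1]] order_trans[OF e2 add_mono[OF p2 q2]]])
    also have "\<dots> = (2 * cphi K + 2) / \<gamma> * n"
    proof -
      have e: "2 * k + 2 / \<gamma> = (2 * cphi K + 2) / \<gamma>" by (simp add: k_def add_divide_distrib)
      have "(k * n + n / \<gamma>) + (k * n + n / \<gamma>) = (2 * k + 2 / \<gamma>) * n" by (simp add: algebra_simps)
      then show ?thesis by (simp only: e)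
    qed
    also have "\<dots> \<le> CKg a L c K / \<gamma> * n"
      using gam n0 cphi_nn a_pos by (intro mult_right_mono divide_right_mono) (auto simp: CK_eq)
    finally show ?thesis .
  qed
  finally show "norm (DG Gf \<alpha> \<beta> z - DG Gf \<alpha> \<beta> w) \<le> CKg a L c K / \<gamma> * norm (z - w)"
    by (simp add: n_def)
qed

lemma vertex_test_Gf: "vertex_test N H \<gamma> Gf"
  unfolding vertex_test_def
proof (intro conjI)
  show "\<forall>\<alpha><N. \<forall>\<beta><N. continuous_on ({0..} \<times> {0..}) (\<lambda>z. Gf (jpt \<alpha> (fst z)) (jpt \<beta> (snd z)))"
    by (simp add: G_jpt Fab_cont2)
  show "\<forall>x\<in>J N. C1J N (Gf x)" using C1J_x by blast
  show "\<forall>y\<in>J N. C1J N (\<lambda>x. Gf x y)" using C1J_y by blast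
  show "\<forall>x\<in>J N. \<forall>y\<in>J N. 0 \<le> Gf x y" using G_nonneg by blast
  show "Gf (0, 0) (0, 0) = 0" by (rule G00)
  show "\<forall>x\<in>J N. 0 \<le> Gf x x \<and> Gf x x \<le> \<gamma>" using G_diag by blast
  show "\<forall>x\<in>J N. \<forall>y\<in>J N. Hb N H (A0 N H + \<gamma>) y (\<lambda>\<beta>. - grad (Gf x) y \<beta>)
       - Hb N H (A0 N H + \<gamma>) x (grad (\<lambda>x'. Gf x' y) x) \<le> \<gamma>" using prop_iv by blast
  show "\<exists>g. mono_on {0..} g \<and> (\<forall>x\<in>J N. \<forall>y\<in>J N. g (dJ x y) \<le> Gf x y) \<and>
         filterlim (\<lambda>a. g a / a) at_top at_top" by (rule prop_v)
  show "\<forall>K\<ge>0. \<exists>C. \<forall>x\<in>J N. \<forall>y\<in>J N. dJ x y \<le> K \<longrightarrow>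
        gnorm N (grad (\<lambda>x'. Gf x' y) x) + gnorm N (grad (Gf x) y) \<le> C" by (rule prop_vi)
qed

end



lemma quasi_mono:
  fixes f :: "real \<Rightarrow> real"
  assumes cv: "\<And>c. convex {p. f p \<le> c}" and m: "\<And>p. f 0 \<le> f p"
    and "0 \<le> p" "p \<le> q"
  shows "f p \<le> f q"
proof (cases "q = 0")
  case True then show ?thesis using assms by simp
next
  case False
  then have q: "q > 0" using assms by simp
  have S: "convex {x. f x \<le> f q}" by (rule cv)
  have "(1 - p / q) *\<^sub>R 0 + (p / q) *\<^sub>R q \<in> {x. f x \<le> f q}"
    by (rule convexD[OF S]) (use m q assms in \<open>auto simp: field_simps\<close>)
  then show ?thesis using q by simp
qed

theorem proposition5p1:
  fixes N :: nat and H :: "nat \<Rightarrow> real \<Rightarrow> real"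
  assumes "N \<ge> 1"
    and "hamiltonians N H"
    and "\<forall>\<alpha><N. \<forall>p. H \<alpha> 0 \<le> H \<alpha> p"
  shows "\<exists>C :: real \<Rightarrow> real. \<forall>\<gamma>>0. \<exists>G. vertex_test N H \<gamma> G \<and>
           (\<forall>K>0. C11_on N G K (C K / \<gamma>))"
proof -
  note hm = assms(2)[unfolded hamiltonians_def]
  have "\<forall>\<alpha>\<in>{..<N}. \<exists>L. lipschitz_on L UNIV (H \<alpha>)" using hm by auto
  then obtain Lf where Lf: "\<And>\<alpha>. \<alpha> < N \<Longrightarrow> lipschitz_on (Lf \<alpha>) UNIV (H \<alpha>)"
    using bchoice[of "{..<N}"] by (metis lessThan_iff)
  define L where "L = 1 + (\<Sum>\<alpha><N. \<bar>Lf \<alpha>\<bar>)"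
  have L1: "L \<ge> 1" unfolding L_def by (simp add: sum_nonneg)
  have Hlip: "\<bar>H \<alpha> p - H \<alpha> q\<bar> \<le> L * \<bar>p - q\<bar>" if "\<alpha> < N" for \<alpha> p q
  proof -
    have "\<bar>H \<alpha> p - H \<alpha> q\<bar> \<le> Lf \<alpha> * \<bar>p - q\<bar>"
      using lipschitz_onD[OF Lf[OF that], of p q] by (simp add: dist_real_def)
    also have "\<dots> \<le> \<bar>Lf \<alpha>\<bar> * \<bar>p - q\<bar>" by (intro mult_right_mono) auto
    also have "\<bar>Lf \<alpha>\<bar> \<le> L" unfolding L_def
      using member_le_sum[of \<alpha> "{..<N}" "\<lambda>\<alpha>. \<bar>Lf \<alpha>\<bar>"] that by simp
    then have "\<bar>Lf \<alpha>\<bar> * \<bar>p - q\<bar> \<le> L * \<bar>p - q\<bar>" by (intro mult_right_mono) auto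
    finally show ?thesis .
  qed
  have Hmono: "H \<alpha> p \<le> H \<alpha> q" if "\<alpha> < N" "0 \<le> p" "p \<le> q" for \<alpha> p q
    by (rule quasi_mono[OF _ _ that(2,3)]) (use hm assms(3) that(1) in auto)
  define Az where "Az = A0 N H"
  have inf: "Inf (range (H \<alpha>)) = H \<alpha> 0" if "\<alpha> < N" for \<alpha>
    by (rule cInf_eq_minimum) (use assms(3) that in auto)
  have H0: "H \<alpha> 0 \<le> Az" if "\<alpha> < N" for \<alpha>
  proof -
    have "Inf (range (H \<alpha>)) \<le> Max ((\<lambda>\<alpha>. Inf (range (H \<alpha>))) ` {..<N})"
      by (rule Max_ge) (use that in auto)
    then show ?thesis using inf[OF that] by (simp add: Az_def A0_def)
  qed
  have "0 \<in> {..<N}" using assms(1) by simp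
  then have ne: "{..<N} \<noteq> {}" by blast
  define h where "h p = Min ((\<lambda>\<alpha>. H \<alpha> p) ` {..<N})" for p
  have h_le: "h p \<le> H \<alpha> p" if "\<alpha> < N" for \<alpha> p
    unfolding h_def by (rule Min_le) (use that in auto)
  have h_in: "\<exists>\<beta><N. h p = H \<beta> p" for p
  proof -
    have "h p \<in> (\<lambda>\<alpha>. H \<alpha> p) ` {..<N}" unfolding h_def by (rule Min_in) (use ne in auto)
    then show ?thesis by auto
  qed
  have h_mono: "h p \<le> h q" if "0 \<le> p" "p \<le> q" for p q
  proof -
    obtain \<beta> where b: "\<beta> < N" "h q = H \<beta> q" using h_in by blast
    then show ?thesis using h_le[OF b(1), of p] Hmono[OF b(1) that] by simp
  qed
  have h_lip: "\<bar>h p - h q\<bar> \<le> L * \<bar>p - q\<bar>" for p q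
  proof -
    obtain \<beta> where b: "\<beta> < N" "h q = H \<beta> q" using h_in by blast
    obtain \<beta>' where b': "\<beta>' < N" "h p = H \<beta>' p" using h_in by blast
    have "h p \<le> h q + L * \<bar>p - q\<bar>" using h_le[OF b(1), of p] Hlip[OF b(1), of p q] b by linarith
    moreover have "h q \<le> h p + L * \<bar>p - q\<bar>" using h_le[OF b'(1), of q] Hlip[OF b'(1), of q p] b'
      by (simp add: abs_minus_commute) (linarith)?
    ultimately show ?thesis by linarith
  qed
  have h_coerc: "\<exists>R. \<forall>p\<ge>R. h p \<ge> B" for B
  proof -
    have "\<forall>\<alpha>\<in>{..<N}. \<exists>R. \<forall>p. R \<le> norm p \<longrightarrow> B \<le> H \<alpha> p"
    proof
      fix \<alpha> assume "\<alpha> \<in> {..<N}"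
      then have "filterlim (H \<alpha>) at_top at_infinity" using hm by auto
      then have "eventually (\<lambda>p. B \<le> H \<alpha> p) at_infinity" by (simp add: filterlim_at_top)
      then show "\<exists>R. \<forall>p. R \<le> norm p \<longrightarrow> B \<le> H \<alpha> p" by (simp add: eventually_at_infinity)
    qed
    then obtain Rf where Rf: "\<And>\<alpha> p. \<alpha> < N \<Longrightarrow> Rf \<alpha> \<le> norm p \<Longrightarrow> B \<le> H \<alpha> p"
      using bchoice[of "{..<N}"] by (metis lessThan_iff)
    define R where "R = (\<Sum>\<alpha><N. \<bar>Rf \<alpha>\<bar>)"
    have "h p \<ge> B" if "p \<ge> R" for p
    proof -
      obtain \<beta> where b: "\<beta> < N" "h p = H \<beta> p" using h_in by blast
      have "\<bar>Rf \<beta>\<bar> \<le> R" unfolding R_def using member_le_sum[of \<beta> "{..<N}" "\<lambda>\<alpha>. \<bar>Rf \<alpha>\<bar>"] b by simp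
      then have "Rf \<beta> \<le> norm p" using that by auto
      then show ?thesis using Rf[OF b(1)] b by simp
    qed
    then show ?thesis by blast
  qed
  obtain R1 where R1: "\<forall>p\<ge>R1. h p \<ge> Az + 1" using h_coerc by blast
  define a where "a = max R1 1"
  have a_pos: "a > 0" and ha: "h a \<ge> Az + 1" using R1 by (auto simp: a_def)
  have "\<forall>n. \<exists>p. p \<ge> 0 \<and> h (a + p) \<ge> Az + real n + 2"
  proof
    fix n
    obtain R where R: "\<forall>p\<ge>R. h p \<ge> Az + real n + 2" using h_coerc by blast
    show "\<exists>p. p \<ge> 0 \<and> h (a + p) \<ge> Az + real n + 2"
      by (rule exI[of _ "max 0 (R - a)"]) (use R in auto)
  qed
  then obtain c where c0: "\<And>n. c n \<ge> 0" and hc: "\<And>n. h (a + c n) \<ge> Az + real n + 2"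
    by metis
  have loc: "vt N H L Az h a c \<gamma>" if "\<gamma> > 0" for \<gamma>
    by (unfold_locales) (use assms(1) Hmono Hlip L1 H0 Az_def h_le h_mono h_lip h_coerc a_pos ha c0 hc that in auto)
  show ?thesis
  proof (intro exI[of _ "CKg a L c"] allI impI)
    fix \<gamma> :: real assume g: "\<gamma> > 0"
    show "\<exists>G. vertex_test N H \<gamma> G \<and> (\<forall>K>0. C11_on N G K (CKg a L c K / \<gamma>))"
      using vt.vertex_test_Gf[OF loc[OF g]] vt.C11[OF loc[OF g]] Az_def by auto
  qed
qed


end
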